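(* A Sturmian sequence in $\{H,V\}$ is symmetric if and only if it is the cutting sequence of a uniformly distributed geodesic on the square torus passing through a Weierstrass point of the torus. Furthermore: (i) even symmetric Sturmian sequences correspond to geodesics passing through the center point $D$; (ii) almost symmetric Sturmian sequences correspond to geodesics passing through the corner point $A$; (iii) odd symmetric Sturmian sequences correspond to geodesics passing through $B$ or $C$.
   Context: The square torus $\mathbb{T}^2=\mathbb{C}/\mathbb{Z}[i]$ is represented as the unit square with top and bottom edges labeled $V$ and left and right edges labeled $H$. Geodesics have positive slope and are traversed North-East; the cutting sequence of a biinfinite geodesic is the biinfinite sequence of labels of edges crossed, where passing through the corner records two symbols $HV$ or $VH$. A geodesic is uniformly distributed when its slope is irrational. A Sturmian sequence is a biinfinite sequence over two letters that is not eventually periodic and has exactly $n+1$ distinct subwords of each length $n$. The Weierstrass points (fixed points of the $180^\circ$ rotation $\iota$ of the square about its center) are: $A$ the corner, $B$ the midpoint of the horizontal edge $V$, $C$ the midpoint of the vertical edge $H$, and $D$ the center of the square. A sequence $\epsilon$ is odd symmetric if there is $N$ with $\epsilon_{N+k}=\epsilon_{N-k}$ for all $k\ge0$; even symmetric if there is $N$ with $\epsilon_{N+k}=\epsilon_{N-k-1}$ for all $k\ge0$; almost symmetric if there is $N$ with $\epsilon_{N+k}=\epsilon_{N-k-1}$ for all $k\ge1$ and $\epsilon_N\ne\epsilon_{N-1}$; symmetric if it is odd, even, or almost symmetric. *)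

theory Defs
  imports Complex_Main
begin

text \<open>Edge labels of the unit square: left/right edges are H, top/bottom edges are V.\<close>
datatype letter = H | V

type_synonym biseq = "int \<Rightarrow> letter"

text \<open>The geodesic through the point p = (p1,p2) of the plane (a lift) with slope alpha,
  traversed North-East: t \<mapsto> (p1 + t, p2 + alpha * t).
  Crossing events: at time t it crosses a vertical line x \<in> \<int> (an H edge) or a
  horizontal line y \<in> \<int> (a V edge); a corner passage gives both events at the same time.\<close>
definition crossing_events :: "real \<times> real \<Rightarrow> real \<Rightarrow> (real \<times> letter) set" where
  "crossing_events p \<alpha> =
     {(t, H) | t. fst p + t \<in> \<int>} \<union> {(t, V) | t. snd p + \<alpha> * t \<in> \<int>}"

text \<open>epsilon is (an indexing of) the cutting sequence of the geodesic: an order-preserving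
  enumeration of all crossing events by the integers; simultaneous events (corner)
  may be recorded in either order HV or VH.\<close>
definition cutting_sequence :: "real \<times> real \<Rightarrow> real \<Rightarrow> biseq \<Rightarrow> bool" where
  "cutting_sequence p \<alpha> \<epsilon> \<longleftrightarrow>
     (\<exists>\<tau> :: int \<Rightarrow> real. mono \<tau> \<and>
        bij_betw (\<lambda>i. (\<tau> i, \<epsilon> i)) UNIV (crossing_events p \<alpha>))"

definition unif_distributed :: "real \<Rightarrow> bool" where
  "unif_distributed \<alpha> \<longleftrightarrow> \<alpha> > 0 \<and> \<alpha> \<notin> \<rat>"

definition passes_through :: "real \<times> real \<Rightarrow> real \<Rightarrow> real \<times> real \<Rightarrow> bool" where
  "passes_through p \<alpha> q \<longleftrightarrow>
     (\<exists>t. fst p + t - fst q \<in> \<int> \<and> snd p + \<alpha> * t - snd q \<in> \<int>)"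

definition ptA :: "real \<times> real" where "ptA = (0, 0)"
definition ptB :: "real \<times> real" where "ptB = (1/2, 0)"
definition ptC :: "real \<times> real" where "ptC = (0, 1/2)"
definition ptD :: "real \<times> real" where "ptD = (1/2, 1/2)"

definition weierstrass_points :: "(real \<times> real) set" where
  "weierstrass_points = {ptA, ptB, ptC, ptD}"

definition subwords :: "biseq \<Rightarrow> nat \<Rightarrow> letter list set" where
  "subwords \<epsilon> n = {map (\<lambda>k. \<epsilon> (i + int k)) [0..<n] | i. True}"

definition eventually_periodic :: "biseq \<Rightarrow> bool" where
  "eventually_periodic \<epsilon> \<longleftrightarrow> (\<exists>P::int. \<exists>N::int. P > 0 \<and> (\<forall>n\<ge>N. \<epsilon> (n + P) = \<epsilon> n))"

definition sturmian :: "biseq \<Rightarrow> bool" where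
  "sturmian \<epsilon> \<longleftrightarrow> \<not> eventually_periodic \<epsilon> \<and> (\<forall>n. card (subwords \<epsilon> n) = n + 1)"

definition odd_symmetric :: "biseq \<Rightarrow> bool" where
  "odd_symmetric \<epsilon> \<longleftrightarrow> (\<exists>N. \<forall>k::nat. \<epsilon> (N + int k) = \<epsilon> (N - int k))"

definition even_symmetric :: "biseq \<Rightarrow> bool" where
  "even_symmetric \<epsilon> \<longleftrightarrow> (\<exists>N. \<forall>k::nat. \<epsilon> (N + int k) = \<epsilon> (N - int k - 1))"

definition almost_symmetric :: "biseq \<Rightarrow> bool" where
  "almost_symmetric \<epsilon> \<longleftrightarrow>
     (\<exists>N. (\<forall>k::nat. k \<ge> 1 \<longrightarrow> \<epsilon> (N + int k) = \<epsilon> (N - int k - 1)) \<and> \<epsilon> N \<noteq> \<epsilon> (N - 1))"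

definition symmetric :: "biseq \<Rightarrow> bool" where
  "symmetric \<epsilon> \<longleftrightarrow> odd_symmetric \<epsilon> \<or> even_symmetric \<epsilon> \<or> almost_symmetric \<epsilon>"

end

theory Submission
  imports Defs "HOL-Analysis.Kronecker_Approximation_Theorem"
begin

definition vv :: "biseq \<Rightarrow> int \<Rightarrow> int" where "vv e n = (if e n = V then 1 else 0)"
definition SS :: "biseq \<Rightarrow> int \<Rightarrow> int" where
  "SS e n = (\<Sum>k\<in>{0..<n}. vv e k) - (\<Sum>k\<in>{n..<0}. vv e k)"

lemma SS_step: "SS e (n+1) = SS e n + vv e n"
proof (cases "n \<ge> 0")
  case True
  have "{0..<n+1} = insert n {0..<n}" using True by auto
  moreover have "{n+1..<0} = {}" "{n..<0} = {}" using True by auto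
  ultimately show ?thesis unfolding SS_def by simp
next
  case False
  have "{n..<0} = insert n {n+1..<0}" using False by auto
  moreover have "{0..<n+1} = {}" "{0..<n} = {}" using False by auto
  ultimately show ?thesis unfolding SS_def by simp
qed

lemma vv_01: "vv e n = 0 \<or> vv e n = 1" by (simp add: vv_def)

definition cnt :: "biseq \<Rightarrow> int \<Rightarrow> nat \<Rightarrow> int" where
  "cnt e i n = SS e (i + int n) - SS e i"

lemma cnt_0[simp]: "cnt e i 0 = 0" by (simp add: cnt_def)
lemma cnt_Suc: "cnt e i (Suc n) = cnt e i n + vv e (i + int n)"
  unfolding cnt_def using SS_step[of e "i + int n"] by (simp add: ac_simps)
lemma cnt_Suc': "cnt e i (Suc n) = vv e i + cnt e (i+1) n"
  unfolding cnt_def using SS_step[of e i] by (simp add: add.assoc add.commute add.left_commute)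
lemma cnt_add: "cnt e i (a + b) = cnt e i a + cnt e (i + int a) b"
  unfolding cnt_def by (simp add: add.assoc)
lemma cnt_ge0: "cnt e i n \<ge> 0"
  by (induction n) (auto simp: cnt_Suc vv_def)
lemma cnt_le: "cnt e i n \<le> int n"
  by (induction n) (auto simp: cnt_Suc vv_def)

lemma cnt_agree: "(\<And>k. k < n \<Longrightarrow> e (i + int k) = e (j + int k)) \<Longrightarrow> cnt e i n = cnt e j n"
  by (induction n) (auto simp: cnt_Suc vv_def)

lemma cnt_rev: "(\<And>k. k < n \<Longrightarrow> e (i + int k) = e (j + int n - 1 - int k)) \<Longrightarrow> cnt e i n = cnt e j n"
proof (induction n arbitrary: j)
  case 0 then show ?case by simp
next
  case (Suc n)
  have "cnt e i n = cnt e (j+1) n"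
    by (rule Suc.IH) (use Suc.prems in \<open>auto simp: algebra_simps\<close>)
  moreover have "e (i + int n) = e j" using Suc.prems[of n] by simp
  ultimately show ?case using cnt_Suc[of e i n] cnt_Suc'[of e j n] by (simp add: vv_def)
qed


definition pat :: "biseq \<Rightarrow> nat \<Rightarrow> int \<Rightarrow> int \<Rightarrow> bool" where
  "pat e m a b \<longleftrightarrow> e a = H \<and> e (a + int m + 1) = H \<and> e b = V \<and> e (b + int m + 1) = V \<and>
     (\<forall>k<m. e (a + 1 + int k) = e (b + 1 + int k))"

lemma vvH: "e x = H \<Longrightarrow> vv e x = 0" by (simp add: vv_def)
lemma vvV: "e x = V \<Longrightarrow> vv e x = 1" by (simp add: vv_def)
lemma letter_cases: "x = H \<or> x = V" by (cases x) auto

lemma unbal_pat: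
  "cnt e j n \<ge> cnt e i n + 2 \<Longrightarrow> \<exists>m a b. pat e m a b \<and> m + 2 \<le> n"
proof (induction n arbitrary: i j rule: less_induct)
  case (less n)
  have n2: "n \<ge> 2" using less.prems cnt_ge0[of e i n] cnt_le[of e j n] by linarith
  then obtain n1 where n1: "n = Suc n1" by (cases n) auto
  show ?case
  proof (cases "e i = H \<and> e j = V")
    case False
    have "vv e j \<le> vv e i" using False letter_cases[of "e i"] letter_cases[of "e j"] by (auto simp: vv_def)
    hence "cnt e (j+1) n1 \<ge> cnt e (i+1) n1 + 2"
      using less.prems cnt_Suc'[of e i n1] cnt_Suc'[of e j n1] n1 by simp
    from less.IH[OF _ this] n1 show ?thesis by fastforce
  next
    case first: True
    show ?thesis
    proof (cases "e (i + int n1) = H \<and> e (j + int n1) = V")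
      case False
      have "vv e (j + int n1) \<le> vv e (i + int n1)"
        using False letter_cases[of "e (i+int n1)"] letter_cases[of "e (j+int n1)"] by (auto simp: vv_def)
      hence "cnt e j n1 \<ge> cnt e i n1 + 2"
        using less.prems cnt_Suc[of e i n1] cnt_Suc[of e j n1] n1 by simp
      from less.IH[OF _ this] n1 show ?thesis by fastforce
    next
      case last: True
      obtain m where m: "n = m + 2" using n2 by (metis add.commute le_Suc_ex)
      have n1m: "int n1 = int m + 1" using n1 m by simp
      have ci: "cnt e i n = cnt e (i+1) m"
        using cnt_Suc'[of e i "Suc m"] cnt_Suc[of e "i+1" m] first last n1m m
        by (simp add: vvH ac_simps)
      have cj: "cnt e j n = 2 + cnt e (j+1) m"
        using cnt_Suc'[of e j "Suc m"] cnt_Suc[of e "j+1" m] first last n1m m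
        by (simp add: vvV ac_simps)
      define D where "D = cnt e (j+1) m - cnt e (i+1) m"
      have D0: "D \<ge> 0" using less.prems ci cj D_def by simp
      consider "D \<ge> 2" | "D = 1" | "D = 0" using D0 by linarith
      then show ?thesis
      proof cases
        case 1
        hence "cnt e (j+1) m \<ge> cnt e (i+1) m + 2" by (simp add: D_def)
        from less.IH[OF _ this] m show ?thesis by fastforce
      next
        case 2
        have a: "cnt e i (Suc m) = cnt e (i+1) m"
          using cnt_Suc'[of e i m] first by (simp add: vvH)
        have b: "cnt e (j+1) (Suc m) = cnt e (j+1) m + 1"
          using cnt_Suc[of e "j+1" m] last n1m by (simp add: vvV ac_simps)
        have "cnt e (j+1) (Suc m) \<ge> cnt e i (Suc m) + 2" using a b 2 D_def by simp
        from less.IH[OF _ this] m show ?thesis by fastforce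
      next
        case 3
        show ?thesis
        proof (cases "\<forall>k<m. e (i + 1 + int k) = e (j + 1 + int k)")
          case True
          have "pat e m i j" unfolding pat_def using first last True n1m by (simp add: ac_simps)
          then show ?thesis using m by auto
        next
          case False
          then obtain d where d: "d < m" "e (i + 1 + int d) \<noteq> e (j + 1 + int d)"
            and dmin: "\<And>k. k < d \<Longrightarrow> e (i + 1 + int k) = e (j + 1 + int k)"
            using exists_least_iff[of "\<lambda>d. d < m \<and> e (i + 1 + int d) \<noteq> e (j + 1 + int d)"]
            by (metis less_trans)
          have agr: "cnt e (i+1) d = cnt e (j+1) d"
            by (rule cnt_agree) (use dmin in \<open>simp add: ac_simps\<close>)
          consider "e (i + 1 + int d) = H" "e (j + 1 + int d) = V"
            | "e (i + 1 + int d) = V" "e (j + 1 + int d) = H"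
            using d(2) letter_cases[of "e (i + 1 + int d)"] letter_cases[of "e (j + 1 + int d)"] by auto
          then show ?thesis
          proof cases
            case 1
            have a: "cnt e i (Suc (Suc d)) = cnt e (i+1) d"
              using cnt_Suc'[of e i "Suc d"] cnt_Suc[of e "i+1" d] first 1 by (simp add: vvH vvV)
            have b: "cnt e j (Suc (Suc d)) = cnt e (j+1) d + 2"
              using cnt_Suc'[of e j "Suc d"] cnt_Suc[of e "j+1" d] first 1 by (simp add: vvH vvV)
            have "cnt e j (Suc (Suc d)) \<ge> cnt e i (Suc (Suc d)) + 2" using a b agr by simp
            from less.IH[OF _ this] d m show ?thesis by fastforce
          next
            case 2
            have si: "cnt e (i+1) m = cnt e (i+1) d + 1 + cnt e (i + 2 + int d) (m - d - 1)"
            proof -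
              have "m = Suc d + (m - d - 1)" using d by simp
              hence "cnt e (i+1) m = cnt e (i+1) (Suc d) + cnt e (i + 1 + int (Suc d)) (m-d-1)"
                by (metis cnt_add)
              thus ?thesis using cnt_Suc[of e "i+1" d] 2 by (simp add: vvV ac_simps)
            qed
            have sj: "cnt e (j+1) m = cnt e (j+1) d + cnt e (j + 2 + int d) (m - d - 1)"
            proof -
              have "m = Suc d + (m - d - 1)" using d by simp
              hence "cnt e (j+1) m = cnt e (j+1) (Suc d) + cnt e (j + 1 + int (Suc d)) (m-d-1)"
                by (metis cnt_add)
              thus ?thesis using cnt_Suc[of e "j+1" d] 2 by (simp add: vvH ac_simps)
            qed
            have rest: "cnt e (j + 2 + int d) (m - d - 1) = cnt e (i + 2 + int d) (m - d - 1) + 1"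
              using si sj agr 3 D_def by simp
            have idx: "int (m - d - 1) = int m - int d - 1" using d by simp
            have a: "cnt e (i + 2 + int d) (Suc (m-d-1)) = cnt e (i + 2 + int d) (m - d - 1)"
              using cnt_Suc[of e "i + 2 + int d" "m-d-1"] last n1m idx by (simp add: vvH ac_simps)
            have b: "cnt e (j + 2 + int d) (Suc (m-d-1)) = cnt e (j + 2 + int d) (m - d - 1) + 1"
              using cnt_Suc[of e "j + 2 + int d" "m-d-1"] last n1m idx by (simp add: vvV ac_simps)
            have "cnt e (j + 2 + int d) (Suc (m-d-1)) \<ge> cnt e (i + 2 + int d) (Suc (m-d-1)) + 2"
              using a b rest by simp
            from less.IH[OF _ this] d m show ?thesis by fastforce
          qed
        qed
      qed
    qed
  qed
qed


lemma cnt_SucSuc: "cnt e i (Suc (Suc d)) = vv e i + cnt e (i+1) d + vv e (i + 1 + int d)"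
  using cnt_Suc'[of e i "Suc d"] cnt_Suc[of e "i+1" d] by simp

lemma pal_pat:
  assumes "pat e m0 a0 b0"
  shows "\<exists>m a b. pat e m a b \<and> (\<forall>k<m. e (a + 1 + int k) = e (a + int m - int k))"
proof -
  define P where "P m \<longleftrightarrow> (\<exists>a b. pat e m a b)" for m
  have "P m0" using assms P_def by auto
  then obtain m where Pm: "P m" and mmin: "\<And>m'. m' < m \<Longrightarrow> \<not> P m'"
    using exists_least_iff[of P] by blast
  then obtain a b where ab: "pat e m a b" unfolding P_def by auto
  have H: "e a = H" "e (a + int m + 1) = H" "e b = V" "e (b + int m + 1) = V"
    and ag: "\<And>k. k<m \<Longrightarrow> e (a + 1 + int k) = e (b + 1 + int k)" using ab unfolding pat_def by auto
  show ?thesis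
  proof (cases "\<forall>k<m. e (a + 1 + int k) = e (a + int m - int k)")
    case True then show ?thesis using ab by blast
  next
    case False
    then obtain d where d: "d < m" "e (a + 1 + int d) \<noteq> e (a + int m - int d)"
      and dmin: "\<And>k. k < d \<Longrightarrow> e (a + 1 + int k) = e (a + int m - int k)"
      using exists_least_iff[of "\<lambda>d. d < m \<and> e (a + 1 + int d) \<noteq> e (a + int m - int d)"]
      by (metis less_trans)
    have agm: "e (b + int m - int k) = e (a + int m - int k)" if "k < m" for k
      using ag[of "m - 1 - k"] that by (simp add: of_nat_diff algebra_simps)
    have rev1: "cnt e (a+1) d = cnt e (b + int m - int d + 1) d"
      by (rule cnt_rev) (use dmin agm d in \<open>auto simp: ac_simps\<close>)
    have rev2: "cnt e (a+1) d = cnt e (a + int m - int d + 1) d"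
      by (rule cnt_rev) (use dmin d in \<open>auto simp: ac_simps\<close>)
    have agr: "cnt e (a+1) d = cnt e (b+1) d"
      by (rule cnt_agree) (use ag d in \<open>auto simp: ac_simps\<close>)
    have "\<exists>m' a' b'. pat e m' a' b' \<and> m' + 2 \<le> Suc (Suc d)"
    proof (cases "e (a + 1 + int d) = H")
      case True
      hence V': "e (a + int m - int d) = V" using d(2) letter_cases by metis
      have c1: "cnt e a (Suc (Suc d)) = cnt e (a+1) d"
        using cnt_SucSuc[of e a d] True H by (simp add: vvH)
      have e2: "e (b + int m - int d) = V" using agm[of d] V' d by simp
      have c2: "cnt e (b + int m - int d) (Suc (Suc d)) = cnt e (a+1) d + 2"
        using cnt_SucSuc[of e "b + int m - int d" d] e2 H rev1 by (simp add: vvV ac_simps)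
      show ?thesis by (rule unbal_pat[where i=a and j="b + int m - int d"]) (use c1 c2 in simp)
    next
      case False
      hence V': "e (a + 1 + int d) = V" using letter_cases by metis
      hence H': "e (a + int m - int d) = H" using d(2) letter_cases by metis
      have c1: "cnt e b (Suc (Suc d)) = cnt e (a+1) d + 2"
        using cnt_SucSuc[of e b d] V' H agr ag[of d] d by (simp add: vvV ac_simps)
      have c2: "cnt e (a + int m - int d) (Suc (Suc d)) = cnt e (a+1) d"
        using cnt_SucSuc[of e "a + int m - int d" d] H' H rev2 by (simp add: vvH ac_simps)
      show ?thesis by (rule unbal_pat[where j=b and i="a + int m - int d"]) (use c1 c2 in simp)
    qed
    then obtain m' a' b' where pm: "pat e m' a' b'" "m' \<le> d" by auto
    hence "P m'" unfolding P_def by auto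
    with mmin[of m'] d pm(2) show ?thesis by simp
  qed
qed


definition wd :: "biseq \<Rightarrow> int \<Rightarrow> nat \<Rightarrow> letter list" where
  "wd e i L = map (\<lambda>k. e (i + int k)) [0..<L]"

lemma subwords_wd: "subwords e L = range (\<lambda>i. wd e i L)"
  unfolding subwords_def wd_def by auto

lemma wd_in: "wd e i L \<in> subwords e L" by (auto simp: subwords_wd)

lemma length_wd[simp]: "length (wd e i L) = L" by (simp add: wd_def)

lemma wd_eq_iff: "wd e i L = wd e j L \<longleftrightarrow> (\<forall>k<L. e (i + int k) = e (j + int k))"
  unfolding wd_def by (auto simp: list_eq_iff_nth_eq)

lemma wd_nth: "k < L \<Longrightarrow> wd e i L ! k = e (i + int k)" by (simp add: wd_def)

lemma wd_snoc: "wd e i (Suc L) = wd e i L @ [e (i + int L)]" by (simp add: wd_def)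
lemma wd_cons: "wd e i (Suc L) = e i # wd e (i+1) L"
  unfolding wd_def by (simp add: map_upt_Suc ac_simps del: upt_Suc)

lemma letter_UNIV: "(UNIV :: letter set) = {H, V}" using letter_cases by auto
lemma finite_letter: "finite (UNIV :: letter set)" by (simp add: letter_UNIV)

lemma finite_subwords: "finite (subwords e L)"
proof -
  have "subwords e L \<subseteq> {xs. set xs \<subseteq> UNIV \<and> length xs = L}" by (auto simp: subwords_wd)
  moreover have "finite {xs. set xs \<subseteq> (UNIV::letter set) \<and> length xs = L}"
    by (rule finite_lists_length_eq) (rule finite_letter)
  ultimately show ?thesis by (rule finite_subset)
qed

lemma subwords_length: "z \<in> subwords e L \<Longrightarrow> length z = L" by (auto simp: subwords_wd)

definition rs :: "biseq \<Rightarrow> letter list \<Rightarrow> bool" where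
  "rs e z \<longleftrightarrow> z @ [H] \<in> subwords e (Suc (length z)) \<and> z @ [V] \<in> subwords e (Suc (length z))"

definition flip :: "letter \<Rightarrow> letter" where "flip c = (if c = H then V else H)"
lemma flip_neq: "flip c \<noteq> c" by (cases c) (auto simp: flip_def)
lemma flip_cases: "x \<noteq> c \<Longrightarrow> x = flip c" by (cases c; cases x) (auto simp: flip_def)

lemma two_rs:
  assumes c1: "card (subwords e (Suc L)) = L + 2" and c0: "card (subwords e L) = L + 1"
    and r1: "rs e z1" and r2: "rs e z2" and l1: "length z1 = L" and l2: "length z2 = L"
  shows "z1 = z2"
proof (rule ccontr)
  assume ne: "z1 \<noteq> z2"
  define F where "F = subwords e L"
  define G where "G = subwords e (Suc L)"
  define ch where "ch z = (SOME c. z @ [c] \<in> G)" for z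
  define g where "g z = z @ [ch z]" for z
  have chG: "z @ [ch z] \<in> G" if "z \<in> F" for z
  proof -
    from that obtain i where "z = wd e i L" unfolding F_def subwords_wd by auto
    hence "z @ [e (i + int L)] \<in> G" unfolding G_def using wd_in[of e i "Suc L"] by (simp add: wd_snoc)
    thus ?thesis unfolding ch_def by (rule someI)
  qed
  have inj: "inj_on g F" unfolding g_def inj_on_def by auto
  have sub: "g ` F \<subseteq> G" using chG g_def by auto
  define x1 where "x1 = z1 @ [flip (ch z1)]"
  define x2 where "x2 = z2 @ [flip (ch z2)]"
  have x1G: "x1 \<in> G" using r1 l1 unfolding rs_def x1_def G_def flip_def by auto
  have x2G: "x2 \<in> G" using r2 l2 unfolding rs_def x2_def G_def flip_def by auto
  have x1n: "x1 \<notin> g ` F" unfolding x1_def g_def using flip_neq by auto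
  have x2n: "x2 \<notin> g ` F" unfolding x2_def g_def using flip_neq by auto
  have x12: "x1 \<noteq> x2" using ne unfolding x1_def x2_def by auto
  have fG: "finite G" unfolding G_def by (rule finite_subwords)
  have fF: "finite F" unfolding F_def by (rule finite_subwords)
  have "card (insert x1 (insert x2 (g ` F))) \<le> card G"
    by (rule card_mono[OF fG]) (use sub x1G x2G in auto)
  moreover have "card (insert x1 (insert x2 (g ` F))) = card F + 2"
    using x1n x2n x12 card_image[OF inj] fF by simp
  ultimately show False using c0 c1 F_def G_def by simp
qed


lemma agree_from_det:
  assumes det: "\<And>t t'. t \<ge> s0 \<Longrightarrow> t' \<ge> s0 \<Longrightarrow> wd e t m = wd e t' m \<Longrightarrow> e (t + int m) = e (t' + int m)"
    and eq: "wd e x m = wd e y m" and xs: "x \<ge> s0" and ys: "y \<ge> s0"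
  shows "e (x + int j) = e (y + int j)"
proof (induction j rule: less_induct)
  case (less j)
  show ?case
  proof (cases "j < m")
    case True then show ?thesis using eq by (simp add: wd_eq_iff)
  next
    case False
    have "wd e (x + int (j - m)) m = wd e (y + int (j - m)) m"
      unfolding wd_eq_iff
    proof (intro allI impI)
      fix k assume k: "k < m"
      have "j - m + k < j" using k False by simp
      from less.IH[OF this] show "e (x + int (j - m) + int k) = e (y + int (j - m) + int k)"
        by (simp add: ac_simps)
    qed
    from det[OF _ _ this] xs ys False show ?thesis by (simp add: ac_simps)
  qed
qed

lemma per_from_det:
  assumes det: "\<And>t t'. t \<ge> s0 \<Longrightarrow> t' \<ge> s0 \<Longrightarrow> wd e t m = wd e t' m \<Longrightarrow> e (t + int m) = e (t' + int m)"
    and c: "card (subwords e m) = m + 1"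
  shows "eventually_periodic e"
proof -
  define f where "f n = wd e (s0 + int n) m" for n
  have "\<not> inj_on f {0..m+1}"
  proof
    assume "inj_on f {0..m+1}"
    from card_inj_on_le[OF this _ finite_subwords[of e m]]
    have "card {0..m+1} \<le> card (subwords e m)" unfolding f_def using wd_in by auto
    thus False using c by simp
  qed
  then obtain n1 n2 where n: "n1 < n2" "f n1 = f n2"
    unfolding inj_on_def by (metis linorder_neqE_nat)
  have ag: "e (s0 + int n1 + int j) = e (s0 + int n2 + int j)" for j
    by (rule agree_from_det[of s0 e m, OF det]) (use n f_def in auto)
  hence "\<forall>x\<ge>s0 + int n1. e (x + (int n2 - int n1)) = e x"
  proof (intro allI impI)
    fix x assume "x \<ge> s0 + int n1"
    then obtain j where "x = s0 + int n1 + int j" by (metis le_add_diff_inverse zle_iff_zadd)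
    moreover have "e (s0 + int n1 + int j) = e (s0 + int n2 + int j)" by (rule ag)
    ultimately show "e (x + (int n2 - int n1)) = e x" by (simp add: algebra_simps)
  qed
  thus ?thesis unfolding eventually_periodic_def using n(1)
    by (intro exI[of _ "int n2 - int n1"] exI[of _ "s0 + int n1"]) auto
qed


lemma sturm_card: "sturmian e \<Longrightarrow> card (subwords e n) = n + 1" by (simp add: sturmian_def)
lemma sturm_aper: "sturmian e \<Longrightarrow> \<not> eventually_periodic e" by (simp add: sturmian_def)

lemma rs_intro: "z @ [x] \<in> subwords e (Suc (length z)) \<Longrightarrow> z @ [y] \<in> subwords e (Suc (length z)) \<Longrightarrow> x \<noteq> y \<Longrightarrow> rs e z"
  unfolding rs_def using letter_cases[of x] letter_cases[of y] by auto

lemma pal_contra: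
  assumes st: "sturmian e" and p: "pat e m a b"
    and pal: "\<forall>k<m. e (a + 1 + int k) = e (a + int m - int k)"
  shows False
proof -
  define w where "w = wd e (a+1) m"
  have pa: "e a = H" "e (a + int m + 1) = H" "e b = V" "e (b + int m + 1) = V"
    and ag: "\<And>k. k<m \<Longrightarrow> e (a + 1 + int k) = e (b + 1 + int k)" using p unfolding pat_def by auto
  have wb: "wd e (b+1) m = w" unfolding w_def wd_eq_iff using ag by auto
  have card: "\<And>n. card (subwords e n) = n + 1" using st by (simp add: sturm_card)
  have card2: "\<And>n. card (subwords e (Suc n)) = n + 2" using card by simp
  have wH: "w @ [H] = wd e (a+1) (Suc m)" unfolding w_def wd_snoc using pa by (simp add: ac_simps)
  have wV: "w @ [V] = wd e (b+1) (Suc m)" unfolding wb[symmetric] wd_snoc using pa by (simp add: ac_simps)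
  have rsw: "rs e w" unfolding rs_def using wH wV wd_in by (simp add: w_def)
  have uniq: "e (t + int m) = e (t' + int m)" if "wd e t m = wd e t' m" "wd e t m \<noteq> w" for t t'
  proof (rule ccontr)
    assume ne: "e (t + int m) \<noteq> e (t' + int m)"
    have "rs e (wd e t m)"
      by (rule rs_intro[of _ "e (t + int m)" _ "e (t' + int m)"])
         (use ne that wd_in[of e t "Suc m"] wd_in[of e t' "Suc m"] in \<open>auto simp: wd_snoc\<close>)
    from two_rs[OF card2 card this rsw] that show False by (simp add: w_def)
  qed
  have wlen: "length w = m" by (simp add: w_def)
  have not2: "\<not> (rs e (H # w) \<and> rs e (V # w))"
  proof
    assume "rs e (H # w) \<and> rs e (V # w)"
    with two_rs[OF card2 card, of "H # w" "V # w"] wlen show False by simp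
  qed
  obtain c s0 where c: "e s0 = c" "wd e (s0+1) m = w" "e (s0 + 1 + int m) = c" "\<not> rs e (c # w)"
  proof (cases "rs e (H # w)")
    case False then show ?thesis using that[of a H] pa w_def by (simp add: ac_simps)
  next
    case True then show ?thesis using that[of b V] pa wb not2 by (simp add: ac_simps)
  qed
  have cw: "(c # w) @ [c] \<in> subwords e (Suc (length (c # w)))"
  proof -
    have "wd e s0 (Suc (Suc m)) = (c # w) @ [c]"
      unfolding wd_cons[of e s0 "Suc m"] wd_snoc[of e "s0+1" m] using c by simp
    thus ?thesis using wd_in[of e s0 "Suc (Suc m)"] wlen by simp
  qed
  have nonrs: "e (t + 1 + int m) = c" if "e t = c" "wd e (t+1) m = w" for t
  proof (rule ccontr)
    assume ne: "e (t + 1 + int m) \<noteq> c"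
    have "wd e t (Suc (Suc m)) = (c # w) @ [e (t + 1 + int m)]"
      unfolding wd_cons[of e t "Suc m"] wd_snoc[of e "t+1" m] using that by simp
    hence "(c # w) @ [e (t + 1 + int m)] \<in> subwords e (Suc (length (c # w)))"
      using wd_in[of e t "Suc (Suc m)"] wlen by simp
    from rs_intro[OF this cw ne] c(4) show False by simp
  qed
  have palR: "e (t - 1) = c" if "wd e s m = w" "e (s + int m) = c" "wd e t m = w" "s < t" "t \<le> s + int m + 1" for s t
  proof (cases "t = s + int m + 1")
    case True then show ?thesis using that by simp
  next
    case False
    define q where "q = nat (t - s)"
    have q: "t = s + int q" "1 \<le> q" "q \<le> m" using that False by (auto simp: q_def)
    have ws: "\<And>k. k < m \<Longrightarrow> e (s + int k) = e (a + 1 + int k)"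
      using that(1) unfolding w_def wd_eq_iff by auto
    have wt: "\<And>k. k < m \<Longrightarrow> e (t + int k) = e (a + 1 + int k)"
      using that(3) unfolding w_def wd_eq_iff by auto
    have "e (s + int m) = e (t + int (m - q))" using q by (simp add: of_nat_diff)
    also have "\<dots> = e (a + 1 + int (m - q))" using wt[of "m-q"] q by simp
    finally have 1: "c = e (a + 1 + int (m - q))" using that(2) by simp
    have "e (t - 1) = e (s + int (q - 1))" using q by (simp add: of_nat_diff algebra_simps)
    also have "\<dots> = e (a + 1 + int (q - 1))" using ws[of "q-1"] q by simp
    also have "\<dots> = e (a + int m - int (q - 1))" using pal q by (metis diff_less less_le_trans zero_less_one)
    also have "\<dots> = e (a + 1 + int (m - q))" using q by (simp add: of_nat_diff algebra_simps)
    finally show ?thesis using 1 by simp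
  qed
  have inf: "\<exists>t>s. wd e t m = w" for s
  proof (rule ccontr)
    assume "\<not> (\<exists>t>s. wd e t m = w)"
    hence "\<And>t. t \<ge> s + 1 \<Longrightarrow> wd e t m \<noteq> w" by auto
    hence nw: "\<And>t. t \<ge> s + 1 \<Longrightarrow> wd e t m \<noteq> w" .
    have "eventually_periodic e"
    proof (rule per_from_det[of "s+1" e m])
      fix t t' assume tt: "s+1 \<le> t" "s+1 \<le> t'" "wd e t m = wd e t' m"
      show "e (t + int m) = e (t' + int m)" by (rule uniq[OF tt(3) nw[OF tt(1)]])
    qed (rule card)
    with st show False by (simp add: sturm_aper)
  qed
  have ret: "\<exists>t. s < t \<and> t \<le> s + int m + 1 \<and> wd e t m = w" if ws: "wd e s m = w" for s
  proof -
    define P where "P n \<longleftrightarrow> 1 \<le> n \<and> wd e (s + int n) m = w" for n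
    obtain t0 where "t0 > s" "wd e t0 m = w" using inf by blast
    hence "P (nat (t0 - s))" unfolding P_def by simp
    then obtain n0 where Pn0: "P n0" and n0min: "\<And>n. n < n0 \<Longrightarrow> \<not> P n"
      using exists_least_iff[of P] by blast
    show ?thesis
    proof (cases "n0 \<le> m + 1")
      case True then show ?thesis using Pn0 unfolding P_def by (intro exI[of _ "s + int n0"]) auto
    next
      case False
      define g where "g k = wd e (s + int k) m" for k
      have "\<not> inj_on g {1..m+1}"
      proof
        assume inj: "inj_on g {1..m+1}"
        have "g ` {1..m+1} \<subseteq> subwords e m - {w}"
        proof
          fix x assume "x \<in> g ` {1..m+1}"
          then obtain k where k: "k \<in> {1..m+1}" "x = g k" by auto
          have "\<not> P k" using n0min k False by auto
          thus "x \<in> subwords e m - {w}" using k wd_in unfolding g_def P_def by auto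
        qed
        from card_inj_on_le[OF inj this] have "card {1..m+1} \<le> card (subwords e m - {w})"
          using finite_subwords by auto
        moreover have "card (subwords e m - {w}) = m"
          using card[of m] finite_subwords[of e m] wd_in[of e "a+1" m] by (simp add: w_def)
        ultimately show False by simp
      qed
      then obtain k1 k2 where k: "k1 \<in> {1..m+1}" "k2 \<in> {1..m+1}" "k1 < k2" "g k1 = g k2"
        unfolding inj_on_def by (metis linorder_neqE_nat)
      have agr: "e (s + int k1 + int j) = e (s + int k2 + int j)" if "k2 + j < n0 + m" for j
        using that
      proof (induction j rule: less_induct)
        case (less j)
        show ?case
        proof (cases "j < m")
          case True then show ?thesis using k(4) unfolding g_def wd_eq_iff by auto
        next
          case jm: False
          have weq: "wd e (s + int (k1 + (j - m))) m = wd e (s + int (k2 + (j - m))) m"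
            unfolding wd_eq_iff
          proof (intro allI impI)
            fix k' assume k': "k' < m"
            have "j - m + k' < j" "k2 + (j - m + k') < n0 + m" using k' jm less.prems by auto
            from less.IH[OF this] show "e (s + int (k1 + (j - m)) + int k') = e (s + int (k2 + (j - m)) + int k')"
              by (simp add: ac_simps)
          qed
          have "\<not> P (k1 + (j - m))" using n0min k less.prems jm by auto
          hence "wd e (s + int (k1 + (j - m))) m \<noteq> w" using k unfolding P_def by auto
          from uniq[OF weq this] show ?thesis using jm by (simp add: ac_simps)
        qed
      qed
      have "wd e (s + int (k1 + (n0 - k2))) m = wd e (s + int n0) m"
        unfolding wd_eq_iff
      proof (intro allI impI)
        fix k' assume "k' < m"
        hence "k2 + (n0 - k2 + k') < n0 + m" using False k by auto
        from agr[OF this] show "e (s + int (k1 + (n0 - k2)) + int k') = e (s + int n0 + int k')"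
          using False k by (simp add: of_nat_diff algebra_simps)
      qed
      hence "P (k1 + (n0 - k2))" using Pn0 k unfolding P_def by auto
      moreover have "k1 + (n0 - k2) < n0" using k False by auto
      ultimately show ?thesis using n0min by blast
    qed
  qed
  define s1 where "s1 = s0 + 1"
  have main: "wd e (s1 + int n) m = w \<longrightarrow> e (s1 + int n + int m) = c" for n
  proof (induction n rule: less_induct)
    case (less n)
    show ?case
    proof (cases "n = 0")
      case True then show ?thesis using c by (simp add: s1_def)
    next
      case n0: False
      show ?thesis
      proof
        assume wn: "wd e (s1 + int n) m = w"
        define T where "T = {k. k < n \<and> wd e (s1 + int k) m = w}"
        have "0 \<in> T" using n0 c(2) by (simp add: T_def s1_def)
        hence T: "finite T" "T \<noteq> {}" by (auto simp: T_def)
        define k0 where "k0 = Max T"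
        have k0: "k0 \<in> T" "\<And>k. k \<in> T \<Longrightarrow> k \<le> k0" using T by (auto simp: k0_def)
        have ck0: "e (s1 + int k0 + int m) = c" using less.IH[of k0] k0(1) by (auto simp: T_def)
        have wk0: "wd e (s1 + int k0) m = w" using k0 by (auto simp: T_def)
        obtain t where t: "s1 + int k0 < t" "t \<le> s1 + int k0 + int m + 1" "wd e t m = w"
          using ret[OF wk0] by blast
        have "\<not> (t < s1 + int n)"
        proof
          assume "t < s1 + int n"
          hence "nat (t - s1) \<in> T" using t unfolding T_def by auto
          hence "nat (t - s1) \<le> k0" by (rule k0(2))
          thus False using t by auto
        qed
        hence le: "s1 + int n \<le> s1 + int k0 + int m + 1" using t by auto
        have kn: "k0 < n" using k0 by (auto simp: T_def)
        have "e (s1 + int n - 1) = c"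
          by (rule palR[OF wk0 ck0 wn]) (use kn le in auto)
        from nonrs[OF this] wn show "e (s1 + int n + int m) = c" by simp
      qed
    qed
  qed
  have "eventually_periodic e"
  proof (rule per_from_det[of s1 e m])
    fix t t' assume tt: "s1 \<le> t" "s1 \<le> t'" "wd e t m = wd e t' m"
    show "e (t + int m) = e (t' + int m)"
    proof (cases "wd e t m = w")
      case False then show ?thesis using uniq tt by blast
    next
      case True
      obtain n n' where "t = s1 + int n" "t' = s1 + int n'" using tt by (metis zle_iff_zadd)
      then show ?thesis using main[of n] main[of n'] True tt by auto
    qed
  qed (use card in auto)
  with st show False by (simp add: sturm_aper)
qed

lemma sturm_balanced:
  assumes "sturmian e" shows "cnt e j n \<le> cnt e i n + 1"
proof (rule ccontr)
  assume "\<not> ?thesis"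
  hence "cnt e j n \<ge> cnt e i n + 2" by simp
  from unbal_pat[OF this] obtain m a b where "pat e m a b" by blast
  from pal_pat[OF this] obtain m a b where "pat e m a b" "\<forall>k<m. e (a + 1 + int k) = e (a + int m - int k)" by blast
  from pal_contra[OF assms this] show False .
qed


lemma cnt_mult: "cnt e i (n * k) = (\<Sum>l<k. cnt e (i + int (l * n)) n)"
proof (induction k)
  case 0 then show ?case by simp
next
  case (Suc k)
  have "n * Suc k = n * k + n" by simp
  hence "cnt e i (n * Suc k) = cnt e i (n * k) + cnt e (i + int (n * k)) n" by (metis cnt_add)
  thus ?case using Suc by (simp add: mult.commute)
qed

lemma bal_key:
  assumes bal: "\<And>i j n. cnt e j n \<le> cnt e i n + 1"
  shows "int k * (cnt e i n - 1) \<le> int n * (cnt e j k + 1)"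
proof -
  have "int k * (cnt e i n - 1) = (\<Sum>l<k. cnt e i n - 1)" by simp
  also have "\<dots> \<le> (\<Sum>l<k. cnt e (i + int (l * n)) n)"
    by (rule sum_mono) (use bal in \<open>smt (verit)\<close>)
  also have "\<dots> = cnt e i (n * k)" by (rule cnt_mult[symmetric])
  also have "\<dots> = cnt e i (k * n)" by (simp add: mult.commute)
  also have "\<dots> = (\<Sum>l<n. cnt e (i + int (l * k)) k)" by (rule cnt_mult)
  also have "\<dots> \<le> (\<Sum>l<n. cnt e j k + 1)" by (rule sum_mono) (use bal in \<open>smt (verit)\<close>)
  also have "\<dots> = int n * (cnt e j k + 1)" by simp
  finally show ?thesis .
qed

lemma bal_theta:
  assumes bal: "\<And>i j n. cnt e j n \<le> cnt e i n + 1"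
  obtains \<theta> :: real where "\<And>i n. n \<ge> 1 \<Longrightarrow> \<bar>real_of_int (cnt e i n) - real n * \<theta>\<bar> \<le> 1"
proof -
  define A where "A = {(real_of_int (cnt e i n) - 1) / real n | i n. n \<ge> 1}"
  have ub: "x \<le> (real_of_int (cnt e j k) + 1) / real k" if "x \<in> A" "k \<ge> 1" for x j k
  proof -
    obtain i n where x: "x = (real_of_int (cnt e i n) - 1) / real n" "n \<ge> 1" using \<open>x \<in> A\<close> A_def by auto
    have "real_of_int (int k * (cnt e i n - 1)) \<le> real_of_int (int n * (cnt e j k + 1))"
      using bal_key[OF bal, of k i n j] by (simp only: of_int_le_iff)
    hence le: "real k * (real_of_int (cnt e i n) - 1) \<le> real n * (real_of_int (cnt e j k) + 1)" by simp
    have "x = (real k * (real_of_int (cnt e i n) - 1)) / (real n * real k)" using x that by simp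
    also have "\<dots> \<le> (real n * (real_of_int (cnt e j k) + 1)) / (real n * real k)"
      by (rule divide_right_mono[OF le]) simp
    also have "\<dots> = (real_of_int (cnt e j k) + 1) / real k" using x by simp
    finally show ?thesis .
  qed
  have ne: "A \<noteq> {}" unfolding A_def by (auto intro!: exI[of _ 1])
  have bdd: "bdd_above A" using ub[of _ 1 0] by (auto intro!: bdd_aboveI)
  define \<theta> where "\<theta> = Sup A"
  show thesis
  proof (rule that)
    fix i n assume n: "(n::nat) \<ge> 1"
    have "(real_of_int (cnt e i n) - 1) / real n \<in> A" using n A_def by auto
    hence 1: "(real_of_int (cnt e i n) - 1) / real n \<le> \<theta>" unfolding \<theta>_def using bdd by (simp add: cSup_upper)
    have 2: "\<theta> \<le> (real_of_int (cnt e i n) + 1) / real n" unfolding \<theta>_def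
      by (rule cSup_least[OF ne]) (use ub n in auto)
    from 1 2 n show "\<bar>real_of_int (cnt e i n) - real n * \<theta>\<bar> \<le> 1"
      by (simp add: divide_simps abs_le_iff) (simp add: algebra_simps)
  qed
qed


lemma bal_irr:
  assumes bal: "\<And>i j n. cnt e j n \<le> cnt e i n + 1"
    and aper: "\<not> eventually_periodic e"
    and th: "\<And>i n. n \<ge> 1 \<Longrightarrow> \<bar>real_of_int (cnt e i n) - real n * \<theta>\<bar> \<le> 1"
  shows "\<theta> \<notin> \<rat>"
proof
  assume "\<theta> \<in> \<rat>"
  then obtain a b where ab: "b > 0" "\<theta> = of_int a / of_int b" by (metis Rats_cases')
  define q where "q = nat b"
  have q: "q \<ge> 1" "real q * \<theta> = real_of_int a" using ab by (auto simp: q_def)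
  define d where "d i = cnt e i q - a" for i
  have dsum: "\<bar>\<Sum>l<K. d (i + int (l * q))\<bar> \<le> 1" if "K \<ge> 1" for i K
  proof -
    have "cnt e i (q * K) = (\<Sum>l<K. cnt e (i + int (l * q)) q)" by (rule cnt_mult)
    also have "\<dots> = (\<Sum>l<K. d (i + int (l * q))) + int K * a" by (simp add: d_def sum_subtractf)
    finally have 1: "cnt e i (q * K) = (\<Sum>l<K. d (i + int (l * q))) + int K * a" .
    have "q * K \<ge> 1" using q that by simp
    from th[OF this, of i] have t: "\<bar>real_of_int (cnt e i (q*K)) - real (q*K) * \<theta>\<bar> \<le> 1" .
    have eq: "real (q*K) * \<theta> = real K * real_of_int a" using q by (simp add: algebra_simps)
    have "\<bar>real_of_int (cnt e i (q * K) - int K * a)\<bar> \<le> 1" using t unfolding eq by simp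
    hence "\<bar>cnt e i (q * K) - int K * a\<bar> \<le> 1" by linarith
    thus ?thesis using 1 by simp
  qed
  have d1: "\<bar>d i\<bar> \<le> 1" for i using dsum[of 1 i] by simp
  have sign: "(\<forall>i. d i \<ge> 0) \<or> (\<forall>i. d i \<le> 0)"
  proof (rule ccontr)
    assume "\<not> ?thesis"
    then obtain i j where "d i < 0" "d j > 0" using not_le by blast
    hence "d i = -1" "d j = 1" using d1[of i] d1[of j] by auto
    hence "cnt e j q = cnt e i q + 2" by (simp add: d_def)
    with bal[of j q i] show False by simp
  qed
  have abssum: "(\<Sum>l<K. \<bar>d (i + int (l * q))\<bar>) \<le> 1" if "K \<ge> 1" for i K
    using sign
  proof
    assume "\<forall>i. d i \<ge> 0" then show ?thesis using dsum[OF that, of i] by simp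
  next
    assume "\<forall>i. d i \<le> 0"
    hence "(\<Sum>l<K. \<bar>d (i + int (l * q))\<bar>) = - (\<Sum>l<K. d (i + int (l * q)))"
      by (simp add: sum_negf[symmetric])
    then show ?thesis using dsum[OF that, of i] by simp
  qed
  have two: False if "L \<ge> 1" "d i \<noteq> 0" "d (i + int (L * q)) \<noteq> 0" for i L
  proof -
    have "(\<Sum>l\<in>{0, L}. \<bar>d (i + int (l * q))\<bar>) \<le> (\<Sum>l<Suc L. \<bar>d (i + int (l * q))\<bar>)"
      by (rule sum_mono2) auto
    moreover have "(\<Sum>l\<in>{0, L}. \<bar>d (i + int (l * q))\<bar>) \<ge> 2" using that by simp
    ultimately show False using abssum[of "Suc L" i] by simp
  qed
  define Z where "Z = {i. d i \<noteq> 0}"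
  have "inj_on (\<lambda>i. i mod int q) Z"
  proof (rule inj_onI)
    fix i j assume ij: "i \<in> Z" "j \<in> Z" "i mod int q = j mod int q"
    show "i = j"
    proof (rule ccontr)
      assume "i \<noteq> j"
      then consider "i < j" | "j < i" by linarith
      then show False
      proof cases
        case 1
        have dv: "int q dvd (j - i)" using mod_eq_dvd_iff[THEN iffD1, OF ij(3)[symmetric]] .
        then obtain L where L: "j - i = int q * L" by blast
        have "0 < int q * L" using 1 L by simp
        hence "L > 0" using q zero_less_mult_pos[of "int q" L] by simp
        hence "j = i + int (nat L * q)" "nat L \<ge> 1" using L by (simp_all add: algebra_simps)
        with two[of "nat L" i] ij show False by (simp add: Z_def)
      next
        case 2
        have dv: "int q dvd (i - j)" using mod_eq_dvd_iff[THEN iffD1, OF ij(3)] .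
        then obtain L where L: "i - j = int q * L" by blast
        have "0 < int q * L" using 2 L by simp
        hence "L > 0" using q zero_less_mult_pos[of "int q" L] by simp
        hence "i = j + int (nat L * q)" "nat L \<ge> 1" using L by (simp_all add: algebra_simps)
        with two[of "nat L" j] ij show False by (simp add: Z_def)
      qed
    qed
  qed
  moreover have "(\<lambda>i. i mod int q) ` Z \<subseteq> {0..<int q}" using q by auto
  ultimately have fZ: "finite Z" by (rule inj_on_finite) simp
  define N where "N = Max (insert 0 Z) + 1"
  have Nb: "i \<ge> N \<Longrightarrow> d i = 0" for i
  proof -
    assume "i \<ge> N"
    have "i \<notin> Z"
    proof
      assume "i \<in> Z"
      hence "i \<le> Max (insert 0 Z)" using fZ by (intro Max_ge) auto
      thus False using \<open>i \<ge> N\<close> by (simp add: N_def)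
    qed
    thus "d i = 0" by (simp add: Z_def)
  qed
  have "\<forall>n\<ge>N. e (n + int q) = e n"
  proof (intro allI impI)
    fix n assume n: "n \<ge> N"
    have "cnt e n q = cnt e (n+1) q" using Nb[OF n] Nb[of "n+1"] n by (simp add: d_def)
    moreover have "cnt e n (Suc q) = vv e n + cnt e (n+1) q" by (rule cnt_Suc')
    moreover have "cnt e n (Suc q) = cnt e n q + vv e (n + int q)" by (rule cnt_Suc)
    ultimately have "vv e n = vv e (n + int q)" by simp
    thus "e (n + int q) = e n" using letter_cases[of "e n"] letter_cases[of "e (n + int q)"]
      by (auto simp: vv_def)
  qed
  hence "eventually_periodic e" unfolding eventually_periodic_def using q
    by (intro exI[of _ "int q"] exI[of _ N]) auto
  with aper show False by simp
qed

lemma bal_range: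
  assumes irr: "\<theta> \<notin> \<rat>"
    and th: "\<And>i n. n \<ge> 1 \<Longrightarrow> \<bar>real_of_int (cnt e i n) - real n * \<theta>\<bar> \<le> 1"
  shows "0 < \<theta>" "\<theta> < 1"
proof -
  have "\<theta> \<noteq> 0" "\<theta> \<noteq> 1" using irr by auto
  show "0 < \<theta>"
  proof (rule ccontr)
    assume "\<not> 0 < \<theta>"
    hence "-\<theta> > 0" using \<open>\<theta> \<noteq> 0\<close> by simp
    then obtain n where n: "1 < real n * (-\<theta>)" using ex_less_of_nat_mult by blast
    hence "n \<ge> 1" by (cases n) auto
    from th[OF this, of 0] n cnt_ge0[of e 0 n] show False by simp
  qed
  show "\<theta> < 1"
  proof (rule ccontr)
    assume "\<not> \<theta> < 1"
    hence "\<theta> - 1 > 0" using \<open>\<theta> \<noteq> 1\<close> by simp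
    then obtain n where n: "1 < real n * (\<theta> - 1)" using ex_less_of_nat_mult by blast
    hence "n \<ge> 1" by (cases n) auto
    from th[OF this, of 0] n cnt_le[of e 0 n] show False by (simp add: algebra_simps)
  qed
qed


definition ceil_mech :: "biseq \<Rightarrow> real \<Rightarrow> real \<Rightarrow> bool" where
  "ceil_mech e \<theta> r \<longleftrightarrow> (\<forall>n. e n = (if \<lceil>real_of_int (n+1) * \<theta> + r\<rceil> = \<lceil>real_of_int n * \<theta> + r\<rceil> + 1 then V else H))"
definition floor_mech :: "biseq \<Rightarrow> real \<Rightarrow> real \<Rightarrow> bool" where
  "floor_mech e \<theta> r \<longleftrightarrow> (\<forall>n. e n = (if \<lfloor>real_of_int (n+1) * \<theta> + r\<rfloor> = \<lfloor>real_of_int n * \<theta> + r\<rfloor> + 1 then V else H))"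

lemma letter_from_SS: "f (n+1) = SS e (n+1) \<Longrightarrow> f n = SS e n \<Longrightarrow> e n = (if f (n+1) = f n + 1 then V else H)"
  using SS_step[of e n] letter_cases[of "e n"] by (auto simp: vv_def)

lemma mech_from_bounds:
  assumes irr: "\<theta> \<notin> \<rat>"
    and th: "\<And>i n. n \<ge> 1 \<Longrightarrow> \<bar>real_of_int (cnt e i n) - real n * \<theta>\<bar> \<le> 1"
  shows "\<exists>r. ceil_mech e \<theta> r \<or> floor_mech e \<theta> r"
proof -
  define c where "c i = real_of_int (SS e i) - real_of_int i * \<theta>" for i
  have lt: "c j - c i < 1 \<and> c i - c j < 1" if "i < j" for i j
  proof -
    define n where "n = nat (j - i)"
    have n: "n \<ge> 1" "real n = real_of_int j - real_of_int i" "i + int n = j" using that by (auto simp: n_def)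
    have cn: "real_of_int (cnt e i n) = real_of_int (SS e j) - real_of_int (SS e i)"
      using n by (simp add: cnt_def)
    have eq: "c j - c i = real_of_int (cnt e i n) - real n * \<theta>"
      unfolding c_def cn n(2) by (simp add: algebra_simps)
    have le: "\<bar>c j - c i\<bar> \<le> 1" using th[OF n(1), of i] eq by simp
    have ne: "\<bar>c j - c i\<bar> \<noteq> 1"
    proof
      assume "\<bar>c j - c i\<bar> = 1"
      hence "real n * \<theta> = real_of_int (cnt e i n) - 1 \<or> real n * \<theta> = real_of_int (cnt e i n) + 1"
        using eq by (auto simp: abs_if split: if_splits)
      hence "\<theta> = (real_of_int (cnt e i n) - 1) / real n \<or> \<theta> = (real_of_int (cnt e i n) + 1) / real n"
        using n(1) by (auto simp: field_simps)
      hence "\<theta> \<in> \<rat>" by (auto intro!: Rats_divide)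
      with irr show False by simp
    qed
    show ?thesis using le ne by auto
  qed
  have le1: "c j \<le> c i + 1" for i j
  proof -
    consider "i < j" | "i = j" | "j < i" by linarith
    thus ?thesis using lt[of i j] lt[of j i] by cases auto
  qed
  define \<rho> where "\<rho> = Sup (range c)"
  have bdd: "bdd_above (range c)" by (rule bdd_aboveI[of _ "c 0 + 1"]) (use le1 in auto)
  have up: "c i \<le> \<rho>" for i unfolding \<rho>_def using bdd by (simp add: cSup_upper)
  have lo: "\<rho> - 1 \<le> c i" for i
  proof -
    have "\<rho> \<le> c i + 1" unfolding \<rho>_def by (rule cSup_least) (use le1 in auto)
    thus ?thesis by simp
  qed
  show ?thesis
  proof (cases "\<exists>i0. c i0 = \<rho> - 1")
    case True
    then obtain i0 where i0: "c i0 = \<rho> - 1" by blast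
    have strict: "c i < \<rho>" for i
    proof (rule ccontr)
      assume "\<not> c i < \<rho>"
      hence "c i = \<rho>" using up[of i] by simp
      hence "i \<noteq> i0" using i0 by auto
      then consider "i < i0" | "i0 < i" by linarith
      thus False using lt[of i i0] lt[of i0 i] i0 \<open>c i = \<rho>\<close> by cases auto
    qed
    have SSc: "\<lceil>real_of_int i * \<theta> + (\<rho> - 1)\<rceil> = SS e i" for i
      unfolding ceiling_eq_iff using strict[of i] lo[of i] by (simp add: c_def algebra_simps)
    have "ceil_mech e \<theta> (\<rho> - 1)"
      unfolding ceil_mech_def by (intro allI letter_from_SS SSc)
    thus ?thesis by blast
  next
    case False
    have strict: "\<rho> - 1 < c i" for i using lo[of i] False by (metis order_le_imp_less_or_eq)
    have SSf: "\<lfloor>real_of_int i * \<theta> + \<rho>\<rfloor> = SS e i" for i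
      unfolding floor_eq_iff using strict[of i] up[of i] by (simp add: c_def algebra_simps)
    have "floor_mech e \<theta> \<rho>"
      unfolding floor_mech_def by (intro allI letter_from_SS SSf)
    thus ?thesis by blast
  qed
qed

lemma sturm_mech:
  assumes "sturmian e"
  shows "\<exists>\<theta> r. \<theta> \<notin> \<rat> \<and> 0 < \<theta> \<and> \<theta> < 1 \<and> (ceil_mech e \<theta> r \<or> floor_mech e \<theta> r)"
proof -
  have bal: "\<And>i j n. cnt e j n \<le> cnt e i n + 1" using sturm_balanced[OF assms] .
  obtain \<theta> where th: "\<And>i n. n \<ge> 1 \<Longrightarrow> \<bar>real_of_int (cnt e i n) - real n * \<theta>\<bar> \<le> 1"
    using bal_theta[OF bal] by blast
  have irr: "\<theta> \<notin> \<rat>" by (rule bal_irr[OF bal sturm_aper[OF assms] th])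
  from bal_range[OF irr th] mech_from_bounds[OF irr th] irr show ?thesis by blast
qed


lemma realize_ceil:
  assumes irr: "\<theta> \<notin> \<rat>" and t0: "0 < \<theta>" and t1: "\<theta> < 1" and cm: "ceil_mech e \<theta> r"
  shows "cutting_sequence (-r, r) (\<theta> / (1 - \<theta>)) e"
proof -
  define C where "C n = \<lceil>real_of_int n * \<theta> + r\<rceil>" for n
  define \<alpha> where "\<alpha> = \<theta> / (1 - \<theta>)"
  have eC: "e n = (if C (n+1) = C n + 1 then V else H)" for n using cm unfolding ceil_mech_def C_def by blast
  have Cb: "real_of_int (C n) - 1 < real_of_int n * \<theta> + r" "real_of_int n * \<theta> + r \<le> real_of_int (C n)" for n
    unfolding C_def by (simp_all add: ceiling_correct ceiling_le_iff[symmetric])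
  have Cs: "real_of_int (n+1) * \<theta> + r = real_of_int n * \<theta> + r + \<theta>" for n by (simp add: algebra_simps)
  have Cst: "C n \<le> C (n+1) \<and> C (n+1) \<le> C n + 1" for n
  proof -
    have "\<lceil>real_of_int n * \<theta> + r\<rceil> \<le> \<lceil>real_of_int (n+1) * \<theta> + r\<rceil>"
      by (rule ceiling_mono) (use t0 Cs[of n] in simp)
    moreover have "\<lceil>real_of_int (n+1) * \<theta> + r\<rceil> \<le> \<lceil>(real_of_int n * \<theta> + r) + 1\<rceil>"
      by (rule ceiling_mono) (use t1 Cs[of n] in simp)
    ultimately show ?thesis unfolding C_def by simp
  qed
  define u where "u n = (if e n = V then (real_of_int (C n) - r) / \<theta> else (real_of_int n + 1 - real_of_int (C n) + r) / (1 - \<theta>))" for n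
  define \<tau> where "\<tau> n = (1 - \<theta>) * u n" for n
  have uV: "real_of_int n \<le> u n \<and> u n < real_of_int n + 1" if "e n = V" for n
  proof -
    have c1: "C (n+1) = C n + 1" using eC[of n] that by (auto split: if_splits)
    have a: "real_of_int n * \<theta> + r \<le> real_of_int (C n)" by (rule Cb(2))
    have b: "real_of_int (C n) < real_of_int n * \<theta> + r + \<theta>" using Cb(1)[of "n+1"] c1 Cs[of n] by simp
    have "u n = (real_of_int (C n) - r) / \<theta>" using that by (simp add: u_def)
    hence eq: "\<theta> * u n = real_of_int (C n) - r" using t0 by simp
    have "\<theta> * real_of_int n \<le> \<theta> * u n" "\<theta> * u n < \<theta> * (real_of_int n + 1)"
      using a b eq unfolding distrib_left by (simp_all add: mult.commute)
    thus ?thesis using t0 by (simp add: mult_le_cancel_left_pos mult_less_cancel_left_pos)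
  qed
  have uH: "real_of_int n < u n \<and> u n \<le> real_of_int n + 1" if "e n = H" for n
  proof -
    have c1: "C (n+1) = C n" using eC[of n] that Cst[of n] by (auto split: if_splits)
    have a: "real_of_int (C n) < real_of_int n * \<theta> + r + 1" using Cb(1)[of n] by simp
    have b: "real_of_int n * \<theta> + r + \<theta> \<le> real_of_int (C n)" using Cb(2)[of "n+1"] c1 Cs[of n] by simp
    have "u n = (real_of_int n + 1 - real_of_int (C n) + r) / (1 - \<theta>)" using that by (simp add: u_def)
    hence eq: "(1 - \<theta>) * u n = real_of_int n + 1 - real_of_int (C n) + r" using t1 by simp
    have "(1 - \<theta>) * real_of_int n < (1 - \<theta>) * u n" "(1 - \<theta>) * u n \<le> (1 - \<theta>) * (real_of_int n + 1)"
      using a b eq unfolding distrib_left left_diff_distrib by (simp_all add: mult.commute)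
    thus ?thesis using t1 by (simp add: mult_le_cancel_left_pos mult_less_cancel_left_pos)
  qed
  have ub: "real_of_int n \<le> u n \<and> u n \<le> real_of_int n + 1" for n
    using uV[of n] uH[of n] letter_cases[of "e n"] by auto
  have umono: "u i \<le> u j" if "i \<le> j" for i j
  proof (cases "i = j")
    case False
    hence "i + 1 \<le> j" using that by simp
    thus ?thesis using ub[of i] ub[of j] by (smt (verit) of_int_le_iff of_int_add of_int_1)
  qed simp
  have mono: "mono \<tau>" unfolding mono_def \<tau>_def using umono t1 by (simp add: mult_left_mono)
  define E where "E = crossing_events (-r, r) \<alpha>"
  have ev: "(\<tau> n, e n) \<in> E" for n
  proof (cases "e n = V")
    case True
    have "r + \<alpha> * \<tau> n = real_of_int (C n)" using True t0 t1
      by (simp add: \<tau>_def u_def \<alpha>_def field_simps)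
    thus ?thesis using True by (simp add: E_def crossing_events_def)
  next
    case False
    hence H: "e n = H" using letter_cases by blast
    have "-r + \<tau> n = real_of_int (n + 1 - C n)" using H t1 by (simp add: \<tau>_def u_def field_simps)
    hence "-r + \<tau> n \<in> \<int>" by (metis Ints_of_int)
    thus ?thesis using H by (simp add: E_def crossing_events_def)
  qed
  have inj: "inj (\<lambda>n. (\<tau> n, e n))"
  proof (rule injI)
    fix i j assume eq: "(\<tau> i, e i) = (\<tau> j, e j)"
    have uu: "u i = u j" using eq t1 by (simp add: \<tau>_def)
    show "i = j"
    proof (rule ccontr)
      assume "i \<noteq> j"
      hence ij: "i < j \<or> j < i" by linarith
      have nf: False if "a < b" "u a = u b" "e a = e b" for a b
      proof -
        have "a + 1 \<le> b" using that by simp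
        hence "real_of_int a + 1 \<le> real_of_int b" by linarith
        hence eqs: "u a = real_of_int a + 1" "u b = real_of_int b" using ub[of a] ub[of b] that by auto
        show False
        proof (cases "e a = V")
          case True thus False using uV[of a] eqs by simp
        next
          case False
          hence "e b = H" using that letter_cases by metis
          thus False using uH[of b] eqs by simp
        qed
      qed
      show False using ij nf[of i j] nf[of j i] uu eq by auto
    qed
  qed
  have surj: "E \<subseteq> range (\<lambda>n. (\<tau> n, e n))"
  proof
    fix x assume xE: "x \<in> E"
    obtain t L where x: "x = (t, L)" by fastforce
    show "x \<in> range (\<lambda>n. (\<tau> n, e n))"
    proof (cases L)
      case H
      with xE x obtain k where k: "-r + t = real_of_int k" by (auto simp: E_def crossing_events_def elim: Ints_cases)
      define uu where "uu = t / (1 - \<theta>)"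
      have tu: "t = (1 - \<theta>) * uu" using t1 by (simp add: uu_def)
      define n where "n = \<lceil>uu\<rceil> - 1"
      have nb: "real_of_int n < uu" "uu \<le> real_of_int n + 1" unfolding n_def by (simp_all add: ceiling_correct)
      have p1: "(1 - \<theta>) * real_of_int n < (1 - \<theta>) * uu" using nb t1 by (simp add: mult_strict_left_mono)
      have p2: "(1 - \<theta>) * uu \<le> (1 - \<theta>) * (real_of_int n + 1)" using nb t1 by (simp add: mult_left_mono)
      have r: "r = (1 - \<theta>) * uu - real_of_int k" using k tu by simp
      have Cn: "C n = n + 1 - k" unfolding C_def ceiling_eq_iff using p1 p2 t0 t1 r by (simp add: algebra_simps)
      have Cn1: "C (n+1) = n + 1 - k" unfolding C_def ceiling_eq_iff using p1 p2 t0 t1 r by (simp add: algebra_simps)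
      have en: "e n = H" using eC[of n] Cn Cn1 by simp
      have "\<tau> n = t" using en Cn t1 k by (simp add: \<tau>_def u_def)
      thus ?thesis using en x H by (auto intro!: image_eqI[of _ _ n])
    next
      case V
      with xE x obtain m where m: "r + \<alpha> * t = real_of_int m" by (auto simp: E_def crossing_events_def elim: Ints_cases)
      define uu where "uu = t / (1 - \<theta>)"
      have tu: "t = (1 - \<theta>) * uu" using t1 by (simp add: uu_def)
      have ym: "\<theta> * uu + r = real_of_int m" using m t1 by (simp add: \<alpha>_def tu)
      define n where "n = \<lfloor>uu\<rfloor>"
      have nb: "real_of_int n \<le> uu" "uu < real_of_int n + 1" unfolding n_def by simp_all
      have p1: "\<theta> * real_of_int n \<le> \<theta> * uu" using nb t0 by (simp add: mult_left_mono)
      have p2: "\<theta> * uu < \<theta> * (real_of_int n + 1)" using nb t0 by (simp add: mult_strict_left_mono)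
      have q1: "real_of_int n * \<theta> \<le> \<theta> * uu" using p1 by (simp add: mult.commute)
      have q2: "\<theta> * uu < real_of_int n * \<theta> + \<theta>" using p2 by (simp add: algebra_simps)
      have Cn: "C n = m" unfolding C_def ceiling_eq_iff using q1 q2 t0 t1 ym by linarith
      have Cn1: "C (n+1) = m + 1" unfolding C_def ceiling_eq_iff Cs of_int_add of_int_1 distrib_right mult_1_left using q1 q2 t0 t1 ym by linarith
      have en: "e n = V" using eC[of n] Cn Cn1 by simp
      have "u n = (real_of_int m - r) / \<theta>" using en Cn by (simp add: u_def)
      also have "\<dots> = uu" using ym t0 by (simp add: field_simps)
      finally have "\<tau> n = t" using tu by (simp add: \<tau>_def)
      thus ?thesis using en x V by (auto intro!: image_eqI[of _ _ n])
    qed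
  qed
  have "bij_betw (\<lambda>n. (\<tau> n, e n)) UNIV E"
    unfolding bij_betw_def using inj surj ev by auto
  thus ?thesis unfolding cutting_sequence_def E_def \<alpha>_def using mono by blast
qed


lemma dens:
  assumes irr: "\<theta> \<notin> \<rat>" and ab: "a < b"
  shows "\<exists>n h. n \<noteq> N \<and> a < real_of_int n * \<theta> + s - real_of_int h \<and> real_of_int n * \<theta> + s - real_of_int h < b"
proof -
  define M where "M = \<bar>N\<bar> + 1"
  define \<alpha> where "\<alpha> = (a + b) / 2 - s - real_of_int M * \<theta>"
  have "(b - a) / 2 > 0" using ab by simp
  from sequence_of_fractional_parts_is_dense[OF irr this, of \<alpha>]
  obtain h k where hk: "k > 0" "\<bar>real_of_int k * \<theta> - real_of_int h - \<alpha>\<bar> < (b - a) / 2" by blast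
  define n where "n = k + M"
  have "n \<noteq> N" using hk(1) by (simp add: n_def M_def)
  moreover have nexp: "real_of_int n * \<theta> + s - real_of_int h = (real_of_int k * \<theta> - real_of_int h - \<alpha>) + (a + b) / 2"
    by (simp add: n_def \<alpha>_def algebra_simps)
  moreover have "a < real_of_int n * \<theta> + s - real_of_int h \<and> real_of_int n * \<theta> + s - real_of_int h < b"
  proof -
    define w where "w = real_of_int k * \<theta> - real_of_int h - \<alpha>"
    have "\<bar>w\<bar> < (b - a) / 2" using hk(2) by (simp add: w_def)
    moreover have "real_of_int n * \<theta> + s - real_of_int h = w + (a + b) / 2" using nexp by (simp add: w_def)
    ultimately show ?thesis unfolding abs_less_iff by (simp add: field_simps)
  qed
  ultimately show ?thesis by blast
qed

lemma uniqU:
  assumes irr: "\<theta> \<notin> \<rat>"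
    and eq: "\<And>n. n \<noteq> N \<Longrightarrow> \<lceil>real_of_int n * \<theta> + r\<rceil> = \<lfloor>real_of_int n * \<theta> + \<rho>\<rfloor> + K"
  shows "\<rho> = r + 1 - real_of_int K"
proof (rule ccontr)
  assume ne: "\<rho> \<noteq> r + 1 - real_of_int K"
  define d where "d = \<rho> - r - 1 + real_of_int K"
  have fl: "\<lfloor>real_of_int n * \<theta> + \<rho>\<rfloor> = \<lfloor>(real_of_int n * \<theta> + r) + d\<rfloor> + 1 - K" for n
  proof -
    have "real_of_int n * \<theta> + \<rho> = ((real_of_int n * \<theta> + r) + d) + real_of_int (1 - K)"
      by (simp add: d_def)
    thus ?thesis by (simp only: floor_add_int) simp
  qed
  have key: "\<lceil>z\<rceil> = \<lfloor>z + d\<rfloor> + 1" if "n \<noteq> N" "z = real_of_int n * \<theta> + r" for n z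
    using eq[OF that(1)] fl[of n] that(2) by simp
  show False
  proof (cases "d > 0")
    case True
    define \<delta> where "\<delta> = min d 1"
    have \<delta>: "0 < \<delta>" "\<delta> \<le> d" "\<delta> \<le> 1" using True by (auto simp: \<delta>_def)
    obtain n h where nh: "n \<noteq> N" "1 - \<delta> < real_of_int n * \<theta> + r - real_of_int h" "real_of_int n * \<theta> + r - real_of_int h < 1"
      using dens[OF irr, of "1 - \<delta>" 1 N r] \<delta> by auto
    define z where "z = real_of_int n * \<theta> + r"
    have c: "\<lceil>z\<rceil> = h + 1" unfolding ceiling_eq_iff using nh \<delta> by (simp add: z_def)
    have f: "h + 1 \<le> \<lfloor>z + d\<rfloor>" unfolding le_floor_iff using nh \<delta> by (simp add: z_def)
    from key[OF nh(1) z_def] c f show False by simp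
  next
    case False
    hence dn: "d < 0" using ne by (simp add: d_def)
    define \<delta> where "\<delta> = min (-d) 1"
    have \<delta>: "0 < \<delta>" "\<delta> \<le> -d" "\<delta> \<le> 1" using dn by (auto simp: \<delta>_def)
    obtain n h where nh: "n \<noteq> N" "0 < real_of_int n * \<theta> + r - real_of_int h" "real_of_int n * \<theta> + r - real_of_int h < \<delta>"
      using dens[OF irr, of 0 \<delta> N r] \<delta> by auto
    define z where "z = real_of_int n * \<theta> + r"
    have c: "\<lceil>z\<rceil> = h + 1" unfolding ceiling_eq_iff using nh \<delta> by (simp add: z_def)
    have f: "\<lfloor>z + d\<rfloor> < h" unfolding floor_less_iff using nh \<delta> by (simp add: z_def)
    from key[OF nh(1) z_def] c f show False by simp
  qed
qed


lemma half_int: "2 * x \<in> \<int> \<Longrightarrow> \<exists>h\<in>{0, 1/2::real}. x - h \<in> \<int>"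
proof -
  assume "2 * x \<in> \<int>"
  then obtain X where X: "2 * x = real_of_int X" by (auto elim: Ints_cases)
  have "X = 2 * (X div 2) + X mod 2" by simp
  hence "real_of_int X = real_of_int (2 * (X div 2) + X mod 2)" by (rule arg_cong)
  hence "real_of_int X = 2 * real_of_int (X div 2) + real_of_int (X mod 2)" by (simp only: of_int_add of_int_mult of_int_numeral)
  hence "x - real_of_int (X mod 2) / 2 = real_of_int (X div 2)" using X by linarith
  moreover have "X mod 2 = 0 \<or> X mod 2 = 1" by presburger
  ultimately show ?thesis by (auto intro!: bexI[of _ "real_of_int (X mod 2) / 2"])
qed

lemma wpoint: "2 * x \<in> \<int> \<Longrightarrow> 2 * y \<in> \<int> \<Longrightarrow> \<exists>q\<in>weierstrass_points. x - fst q \<in> \<int> \<and> y - snd q \<in> \<int>"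
proof -
  assume "2 * x \<in> \<int>" "2 * y \<in> \<int>"
  then obtain h1 h2 where h: "h1 \<in> {0, 1/2}" "x - h1 \<in> \<int>" "h2 \<in> {0, 1/2}" "y - h2 \<in> \<int>"
    using half_int by meson
  hence "(h1, h2) \<in> weierstrass_points"
    unfolding weierstrass_points_def ptA_def ptB_def ptC_def ptD_def by auto
  thus ?thesis using h by force
qed

lemma ceil_step:
  assumes t0: "0 < \<theta>" and t1: "\<theta> < 1"
  shows "\<lceil>real_of_int n * \<theta> + r\<rceil> \<le> \<lceil>real_of_int (n+1) * \<theta> + r\<rceil> \<and>
         \<lceil>real_of_int (n+1) * \<theta> + r\<rceil> \<le> \<lceil>real_of_int n * \<theta> + r\<rceil> + 1"
proof -
  have Cs: "real_of_int (n+1) * \<theta> + r = real_of_int n * \<theta> + r + \<theta>" by (simp add: algebra_simps)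
  have "\<lceil>real_of_int n * \<theta> + r\<rceil> \<le> \<lceil>real_of_int (n+1) * \<theta> + r\<rceil>"
    by (rule ceiling_mono) (use t0 Cs in simp)
  moreover have "\<lceil>real_of_int (n+1) * \<theta> + r\<rceil> \<le> \<lceil>(real_of_int n * \<theta> + r) + 1\<rceil>"
    by (rule ceiling_mono) (use t1 Cs in simp)
  ultimately show ?thesis by simp
qed

lemma ceil_sym_int:
  assumes irr: "\<theta> \<notin> \<rat>"
    and F: "\<And>n. n \<noteq> N \<Longrightarrow> \<lceil>real_of_int n * \<theta> + r\<rceil> + \<lceil>real_of_int (c + 1 - n) * \<theta> + r\<rceil> = K"
  shows "2 * r + real_of_int (c+1) * \<theta> \<in> \<int>"
proof -
  define \<rho> where "\<rho> = - real_of_int (c+1) * \<theta> - r"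
  have "\<lceil>real_of_int n * \<theta> + r\<rceil> = \<lfloor>real_of_int n * \<theta> + \<rho>\<rfloor> + K" if "n \<noteq> N" for n
  proof -
    have "\<lfloor>real_of_int n * \<theta> + \<rho>\<rfloor> = - \<lceil>real_of_int (c + 1 - n) * \<theta> + r\<rceil>"
      unfolding ceiling_def \<rho>_def by (simp add: algebra_simps)
    thus ?thesis using F[OF that] by simp
  qed
  from uniqU[OF irr this] have "\<rho> = r + 1 - real_of_int K" .
  hence "2 * r + real_of_int (c+1) * \<theta> = real_of_int (K - 1)" by (simp add: \<rho>_def algebra_simps)
  thus ?thesis by (metis Ints_of_int)
qed

lemma dC_eq:
  assumes t0: "0 < \<theta>" and t1: "\<theta> < 1" and cm: "ceil_mech e \<theta> r" and eq: "e a = e b"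
  shows "\<lceil>real_of_int (a+1) * \<theta> + r\<rceil> - \<lceil>real_of_int a * \<theta> + r\<rceil> = \<lceil>real_of_int (b+1) * \<theta> + r\<rceil> - \<lceil>real_of_int b * \<theta> + r\<rceil>"
proof -
  have ea: "e a = (if \<lceil>real_of_int (a+1) * \<theta> + r\<rceil> = \<lceil>real_of_int a * \<theta> + r\<rceil> + 1 then V else H)"
    and eb: "e b = (if \<lceil>real_of_int (b+1) * \<theta> + r\<rceil> = \<lceil>real_of_int b * \<theta> + r\<rceil> + 1 then V else H)"
    using cm unfolding ceil_mech_def by blast+
  show ?thesis using ea eb eq ceil_step[OF t0 t1, of a r] ceil_step[OF t0 t1, of b r]
    by (auto split: if_splits)
qed


lemma const_from_step: "(\<And>n. f (n+1) = f n) \<Longrightarrow> f (n::int) = f k"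
proof (induction n rule: int_induct[where k=k])
  case base then show ?case by simp
next
  case (step1 i) then show ?case by metis
next
  case (step2 i) then show ?case by (metis diff_add_cancel)
qed

lemma const_from_step_except:
  assumes st: "\<And>n. n \<noteq> N - 1 \<Longrightarrow> n \<noteq> N \<Longrightarrow> f (n+1) = f n"
    and jump: "f (N+1) = f (N-1)" and nN: "(n::int) \<noteq> N"
  shows "f n = f (N+1)"
proof (cases "n \<ge> N + 1")
  case True
  have "n \<ge> N + 1 \<longrightarrow> f n = f (N+1)"
  proof (induction n rule: int_induct[where k="N+1"])
    case (step1 i) then show ?case using st[of i] by auto
  qed auto
  then show ?thesis using True by simp
next
  case False
  hence n1: "n \<le> N - 1" using nN by simp
  have "n \<le> N - 1 \<longrightarrow> f n = f (N+1)"
  proof (induction n rule: int_induct[where k="N-1"])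
    case base then show ?case using jump by simp
  next
    case (step2 i) then show ?case using st[of "i - 1"] by auto
  qed auto
  then show ?thesis using n1 by simp
qed

lemma sym_reflect:
  assumes "symmetric e"
  shows "\<exists>c N. (\<forall>n. n \<noteq> N - 1 \<longrightarrow> n \<noteq> N \<longrightarrow> e (c - n) = e n) \<and>
               ((\<forall>n. e (c - n) = e n) \<or> (c = 2 * N - 1 \<and> e N \<noteq> e (N - 1)))"
proof -
  consider "odd_symmetric e" | "even_symmetric e" | "almost_symmetric e"
    using assms unfolding symmetric_def by blast
  then show ?thesis
  proof cases
    case 1
    then obtain N where h: "\<And>k. e (N + int k) = e (N - int k)" unfolding odd_symmetric_def by blast
    have "e (2 * N - n) = e n" for n
    proof (cases "n \<ge> N")
      case True then show ?thesis using h[of "nat (n - N)"] by simp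
    next
      case False then show ?thesis using h[of "nat (N - n)"] by simp
    qed
    then show ?thesis by blast
  next
    case 2
    then obtain N where h: "\<And>k. e (N + int k) = e (N - int k - 1)" unfolding even_symmetric_def by blast
    have "e (2 * N - 1 - n) = e n" for n
    proof (cases "n \<ge> N")
      case True then show ?thesis using h[of "nat (n - N)"] by (simp add: algebra_simps)
    next
      case False then show ?thesis using h[of "nat (N - 1 - n)"] by (simp add: algebra_simps)
    qed
    then show ?thesis by blast
  next
    case 3
    then obtain N where h: "\<And>k. k \<ge> 1 \<Longrightarrow> e (N + int k) = e (N - int k - 1)" and ne: "e N \<noteq> e (N - 1)"
      unfolding almost_symmetric_def by blast
    have "e (2 * N - 1 - n) = e n" if "n \<noteq> N - 1" "n \<noteq> N" for n
    proof (cases "n \<ge> N")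
      case True then show ?thesis using h[of "nat (n - N)"] that by (simp add: algebra_simps)
    next
      case False then show ?thesis using h[of "nat (N - 1 - n)"] that by (simp add: algebra_simps)
    qed
    then show ?thesis using ne by blast
  qed
qed

lemma hard_ceil:
  assumes irr: "\<theta> \<notin> \<rat>" and t0: "0 < \<theta>" and t1: "\<theta> < 1" and cm: "ceil_mech e \<theta> r"
    and sym: "symmetric e"
  shows "\<exists>p \<alpha>. unif_distributed \<alpha> \<and> cutting_sequence p \<alpha> e \<and> (\<exists>q\<in>weierstrass_points. passes_through p \<alpha> q)"
proof -
  obtain c N where rf: "\<And>n. n \<noteq> N - 1 \<Longrightarrow> n \<noteq> N \<Longrightarrow> e (c - n) = e n"
    and cs: "(\<forall>n. e (c - n) = e n) \<or> (c = 2 * N - 1 \<and> e N \<noteq> e (N - 1))"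
    using sym_reflect[OF sym] by blast
  define C where "C n = \<lceil>real_of_int n * \<theta> + r\<rceil>" for n
  define F where "F n = C n + C (c + 1 - n)" for n
  have step: "F (n+1) = F n" if "e (c - n) = e n" for n
  proof -
    have "C (n+1) - C n = C (c - n + 1) - C (c - n)"
      using dC_eq[OF t0 t1 cm that[symmetric]] unfolding C_def by simp
    thus ?thesis unfolding F_def by (simp add: algebra_simps)
  qed
  obtain N' K where Fc: "\<And>n. n \<noteq> N' \<Longrightarrow> F n = K"
  proof (cases "\<forall>n. e (c - n) = e n")
    case True
    have st: "F (n+1) = F n" for n by (rule step) (use True in simp)
    have "F n = F 0" for n by (rule const_from_step[of F, OF st])
    thus ?thesis by (intro that[of 0 "F 0"])
  next
    case False
    hence cN: "c = 2 * N - 1" "e N \<noteq> e (N - 1)" using cs by auto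
    have st: "F (n+1) = F n" if "n \<noteq> N - 1" "n \<noteq> N" for n by (rule step) (rule rf[OF that])
    have a1: "c + 1 - (N + 1) = N - 1" "c + 1 - (N - 1) = N + 1" using cN(1) by simp_all
    have j: "F (N+1) = F (N-1)" unfolding F_def a1 by simp
    have "F n = F (N+1)" if "n \<noteq> N" for n by (rule const_from_step_except[of N F, OF st j that])
    thus ?thesis by (intro that[of N "F (N+1)"])
  qed
  have "2 * r + real_of_int (c+1) * \<theta> \<in> \<int>"
    by (rule ceil_sym_int[OF irr, of N' _ _ K]) (use Fc in \<open>simp add: F_def C_def\<close>)
  then obtain Y where Y: "2 * r + real_of_int (c+1) * \<theta> = real_of_int Y" by (auto elim: Ints_cases)
  define \<alpha> where "\<alpha> = \<theta> / (1 - \<theta>)"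
  have cut: "cutting_sequence (-r, r) \<alpha> e" unfolding \<alpha>_def by (rule realize_ceil[OF irr t0 t1 cm])
  have apos: "\<alpha> > 0" using t0 t1 by (simp add: \<alpha>_def)
  have airr: "\<alpha> \<notin> \<rat>"
  proof
    assume "\<alpha> \<in> \<rat>"
    hence "\<alpha> / (1 + \<alpha>) \<in> \<rat>" by (intro Rats_divide Rats_add) auto
    moreover have "\<alpha> / (1 + \<alpha>) = \<theta>" using t0 t1 by (simp add: \<alpha>_def field_simps)
    ultimately show False using irr by simp
  qed
  define t where "t = (1 - \<theta>) * (real_of_int (c+1) / 2)"
  have at: "\<alpha> * t = \<theta> * real_of_int (c+1) / 2" using t1 by (simp add: \<alpha>_def t_def)
  have y: "2 * (r + \<alpha> * t) = real_of_int Y" unfolding at using Y by (simp add: field_simps)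
  have "2 * t = (1 - \<theta>) * real_of_int (c+1)" by (simp add: t_def)
  hence t2: "2 * t = real_of_int (c+1) - real_of_int (c+1) * \<theta>" by (simp only: left_diff_distrib mult_1_left mult.commute)
  have x: "2 * (-r + t) = real_of_int (c + 1 - Y)" using Y t2 by simp
  obtain q where q: "q \<in> weierstrass_points" "(-r + t) - fst q \<in> \<int>" "(r + \<alpha> * t) - snd q \<in> \<int>"
    using wpoint[of "-r + t" "r + \<alpha> * t"] x y by (metis Ints_of_int)
  have "passes_through (-r, r) \<alpha> q" unfolding passes_through_def using q by auto
  thus ?thesis using cut apos airr q unfolding unif_distributed_def by blast
qed


lemma flip_flip[simp]: "flip (flip c) = c" by (cases c) (auto simp: flip_def)
lemma flip_inj: "flip a = flip b \<longleftrightarrow> a = b" by (metis flip_flip)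
lemma flip_HV[simp]: "flip H = V" "flip V = H" by (auto simp: flip_def)

lemma floor_to_ceil:
  assumes t0: "0 < \<theta>" and t1: "\<theta> < 1" and fm: "floor_mech e \<theta> \<rho>"
  shows "ceil_mech (flip \<circ> e) (1 - \<theta>) (- \<rho>)"
  unfolding ceil_mech_def
proof
  fix n
  have cf: "\<lceil>real_of_int m * (1 - \<theta>) + - \<rho>\<rceil> = m - \<lfloor>real_of_int m * \<theta> + \<rho>\<rfloor>" for m
  proof -
    have "real_of_int m * (1 - \<theta>) + - \<rho> = real_of_int m - (real_of_int m * \<theta> + \<rho>)" by (simp add: algebra_simps)
    thus ?thesis unfolding ceiling_def by (simp add: algebra_simps)
  qed
  have Fs: "real_of_int (n+1) * \<theta> + \<rho> = real_of_int n * \<theta> + \<rho> + \<theta>" by (simp add: algebra_simps)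
  have st1: "\<lfloor>real_of_int n * \<theta> + \<rho>\<rfloor> \<le> \<lfloor>real_of_int (n+1) * \<theta> + \<rho>\<rfloor>"
    by (rule floor_mono) (use t0 Fs in simp)
  have st2: "\<lfloor>real_of_int (n+1) * \<theta> + \<rho>\<rfloor> \<le> \<lfloor>(real_of_int n * \<theta> + \<rho>) + 1\<rfloor>"
    by (rule floor_mono) (use t1 Fs in simp)
  have en: "e n = (if \<lfloor>real_of_int (n+1) * \<theta> + \<rho>\<rfloor> = \<lfloor>real_of_int n * \<theta> + \<rho>\<rfloor> + 1 then V else H)"
    using fm unfolding floor_mech_def by blast
  show "(flip \<circ> e) n = (if \<lceil>real_of_int (n + 1) * (1 - \<theta>) + - \<rho>\<rceil> = \<lceil>real_of_int n * (1 - \<theta>) + - \<rho>\<rceil> + 1 then V else H)"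
    unfolding cf using en st1 st2 by auto
qed

lemma sym_flip: "symmetric e \<Longrightarrow> symmetric (flip \<circ> e)"
  unfolding symmetric_def odd_symmetric_def even_symmetric_def almost_symmetric_def
  by (auto simp: flip_inj)

lemma cut_swap:
  assumes apos: "\<alpha> > 0" and cs: "cutting_sequence p \<alpha> (flip \<circ> e)"
  shows "cutting_sequence (snd p, fst p) (1 / \<alpha>) e"
proof -
  obtain \<tau> where m: "mono \<tau>" and b: "bij_betw (\<lambda>i. (\<tau> i, (flip \<circ> e) i)) UNIV (crossing_events p \<alpha>)"
    using cs unfolding cutting_sequence_def by blast
  define \<phi> where "\<phi> x = (\<alpha> * fst x, flip (snd x))" for x :: "real \<times> letter"
  have bphi: "bij_betw \<phi> (crossing_events p \<alpha>) (crossing_events (snd p, fst p) (1 / \<alpha>))"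
  proof (rule bij_betwI[where g="\<lambda>x. (fst x / \<alpha>, flip (snd x))"])
    show "\<phi> \<in> crossing_events p \<alpha> \<rightarrow> crossing_events (snd p, fst p) (1 / \<alpha>)"
      using apos by (auto simp: \<phi>_def crossing_events_def)
    show "(\<lambda>x. (fst x / \<alpha>, flip (snd x))) \<in> crossing_events (snd p, fst p) (1 / \<alpha>) \<rightarrow> crossing_events p \<alpha>"
      using apos by (auto simp: crossing_events_def)
    show "(fst (\<phi> x) / \<alpha>, flip (snd (\<phi> x))) = x" for x using apos by (auto simp: \<phi>_def)
    show "\<phi> (fst y / \<alpha>, flip (snd y)) = y" for y using apos by (auto simp: \<phi>_def)
  qed
  have "bij_betw (\<phi> \<circ> (\<lambda>i. (\<tau> i, (flip \<circ> e) i))) UNIV (crossing_events (snd p, fst p) (1 / \<alpha>))"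
    by (rule bij_betw_trans[OF b bphi])
  moreover have "\<phi> \<circ> (\<lambda>i. (\<tau> i, (flip \<circ> e) i)) = (\<lambda>i. (\<alpha> * \<tau> i, e i))" by (auto simp: \<phi>_def)
  moreover have "mono (\<lambda>i. \<alpha> * \<tau> i)" using m apos by (auto simp: mono_def mult_left_mono)
  ultimately show ?thesis unfolding cutting_sequence_def by auto
qed

lemma pass_swap:
  assumes apos: "\<alpha> > 0" and "passes_through p \<alpha> q"
  shows "passes_through (snd p, fst p) (1 / \<alpha>) (snd q, fst q)"
proof -
  obtain t where t: "fst p + t - fst q \<in> \<int>" "snd p + \<alpha> * t - snd q \<in> \<int>"
    using assms(2) unfolding passes_through_def by blast
  show ?thesis unfolding passes_through_def using t apos
    by (intro exI[of _ "\<alpha> * t"]) auto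
qed

lemma W_swap: "q \<in> weierstrass_points \<Longrightarrow> (snd q, fst q) \<in> weierstrass_points"
  unfolding weierstrass_points_def ptA_def ptB_def ptC_def ptD_def by auto

lemma unif_inv: "unif_distributed \<alpha> \<Longrightarrow> unif_distributed (1 / \<alpha>)"
  unfolding unif_distributed_def by (auto dest: Rats_inverse simp: divide_inverse)

lemma hard:
  assumes st: "sturmian e" and sym: "symmetric e"
  shows "\<exists>p \<alpha>. unif_distributed \<alpha> \<and> cutting_sequence p \<alpha> e \<and> (\<exists>q\<in>weierstrass_points. passes_through p \<alpha> q)"
proof -
  obtain \<theta> r where th: "\<theta> \<notin> \<rat>" "0 < \<theta>" "\<theta> < 1" and m: "ceil_mech e \<theta> r \<or> floor_mech e \<theta> r"
    using sturm_mech[OF st] by blast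
  show ?thesis
  proof (cases "ceil_mech e \<theta> r")
    case True then show ?thesis using hard_ceil[OF th True sym] by blast
  next
    case False
    hence fm: "floor_mech e \<theta> r" using m by blast
    have cm: "ceil_mech (flip \<circ> e) (1 - \<theta>) (-r)" by (rule floor_to_ceil[OF th(2,3) fm])
    have irr: "1 - \<theta> \<notin> \<rat>"
    proof
      assume "1 - \<theta> \<in> \<rat>" hence "1 - (1 - \<theta>) \<in> \<rat>" using Rats_diff Rats_1 by blast
      moreover have "1 - (1 - \<theta>) = \<theta>" by simp
      ultimately show False using th by metis
    qed
    obtain p \<alpha> q where pa: "unif_distributed \<alpha>" "cutting_sequence p \<alpha> (flip \<circ> e)"
      "q \<in> weierstrass_points" "passes_through p \<alpha> q"
      using hard_ceil[OF irr _ _ cm sym_flip[OF sym]] th by auto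
    have apos: "\<alpha> > 0" using pa(1) by (simp add: unif_distributed_def)
    show ?thesis
      using unif_inv[OF pa(1)] cut_swap[OF apos pa(2)] W_swap[OF pa(3)] pass_swap[OF apos pa(4)] by blast
  qed
qed


lemma SD:
  fixes s :: "int \<Rightarrow> int"
  assumes su: "surj s" and dec: "\<And>i j. i < j \<Longrightarrow> s j < s i"
  shows "s i = s 0 - i"
proof -
  have st: "s (i+1) = s i - 1" for i
  proof (rule ccontr)
    assume ne: "s (i+1) \<noteq> s i - 1"
    have lt: "s (i+1) < s i" using dec[of i "i+1"] by simp
    obtain j where j: "s j = s i - 1" using su by (metis surj_def)
    consider "j < i" | "j = i" | "j = i + 1" | "j > i + 1" by linarith
    thus False
    proof cases
      case 1 thus False using dec[OF 1] j by simp
    next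
      case 2 thus False using j by simp
    next
      case 3 thus False using j ne by simp
    next
      case 4 thus False using dec[OF 4] j lt ne by simp
    qed
  qed
  have "s n + n = s 0 + 0" for n by (rule const_from_step[of "\<lambda>n. s n + n"]) (use st in simp)
  thus ?thesis by (metis add.right_neutral add_diff_cancel_right')
qed

lemma half_nint: "(1/2::real) \<notin> \<int>"
proof
  assume "(1/2::real) \<in> \<int>"
  then obtain k where "(1/2::real) = real_of_int k" by (auto elim: Ints_cases)
  hence "real_of_int (2 * k) = 1" by simp
  hence "2 * k = 1" by (simp only: of_int_eq_1_iff)
  thus False by presburger
qed

lemma int_comb: "(a::real) \<in> \<int> \<Longrightarrow> b \<in> \<int> \<Longrightarrow> c \<in> \<int> \<Longrightarrow> 2 * a + b - c \<in> \<int>"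
  by (intro Ints_diff Ints_add Ints_mult) auto

lemma fwd:
  assumes un: "unif_distributed \<alpha>" and cs: "cutting_sequence p \<alpha> e"
    and pt: "passes_through p \<alpha> q" and qW: "q \<in> weierstrass_points"
  shows "(q = ptD \<longrightarrow> even_symmetric e) \<and> (q = ptA \<longrightarrow> almost_symmetric e) \<and>
         (q = ptB \<or> q = ptC \<longrightarrow> odd_symmetric e)"
proof -
  obtain \<tau> where mo: "mono \<tau>" and bij: "bij_betw (\<lambda>i. (\<tau> i, e i)) UNIV (crossing_events p \<alpha>)"
    using cs unfolding cutting_sequence_def by blast
  define E where "E = crossing_events p \<alpha>"
  obtain t0 where t0: "fst p + t0 - fst q \<in> \<int>" "snd p + \<alpha> * t0 - snd q \<in> \<int>"
    using pt unfolding passes_through_def by blast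
  have apos: "\<alpha> > 0" and airr: "\<alpha> \<notin> \<rat>" using un by (auto simp: unif_distributed_def)
  have q2: "2 * fst q \<in> \<int>" "2 * snd q \<in> \<int>" using qW
    unfolding weierstrass_points_def ptA_def ptB_def ptC_def ptD_def by auto
  have gE: "(\<tau> i, e i) \<in> E" for i using bij unfolding bij_betw_def E_def by auto
  have ginj: "i = j" if "\<tau> i = \<tau> j" "e i = e j" for i j
    using bij that unfolding bij_betw_def inj_def by auto
  have gsurj: "\<exists>i. \<tau> i = t \<and> e i = L" if "(t, L) \<in> E" for t L
  proof -
    have "(t, L) \<in> range (\<lambda>i. (\<tau> i, e i))" using bij that unfolding bij_betw_def E_def by simp
    thus ?thesis by auto
  qed
  have memH: "(t, H) \<in> E \<longleftrightarrow> fst p + t \<in> \<int>" for t by (simp add: E_def crossing_events_def)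
  have memV: "(t, V) \<in> E \<longleftrightarrow> snd p + \<alpha> * t \<in> \<int>" for t by (simp add: E_def crossing_events_def)
  have R: "(2 * t0 - t, L) \<in> E" if "(t, L) \<in> E" for t L
  proof (cases L)
    case H
    have eq: "fst p + (2 * t0 - t) = 2 * (fst p + t0 - fst q) + 2 * fst q - (fst p + t)" by simp
    have m: "fst p + t \<in> \<int>" using that H memH by simp
    have "fst p + (2 * t0 - t) \<in> \<int>" unfolding eq by (rule int_comb[OF t0(1) q2(1) m])
    thus ?thesis using H memH by simp
  next
    case V
    have "snd p + \<alpha> * (2 * t0 - t) = 2 * (snd p + \<alpha> * t0 - snd q) + 2 * snd q - (snd p + \<alpha> * t)"
      by (simp add: algebra_simps)
    note eq = this
    have m: "snd p + \<alpha> * t \<in> \<int>" using that V memV by simp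
    have "snd p + \<alpha> * (2 * t0 - t) \<in> \<int>" unfolding eq by (rule int_comb[OF t0(2) q2(2) m])
    thus ?thesis using V memV by simp
  qed
  have dbl: "t = t'" if "(t, H) \<in> E" "(t, V) \<in> E" "(t', H) \<in> E" "(t', V) \<in> E" for t t'
  proof (rule ccontr)
    assume ne: "t \<noteq> t'"
    have "(fst p + t) - (fst p + t') \<in> \<int>" using that memH by (intro Ints_diff) auto
    then obtain a where a: "t - t' = real_of_int a" by (auto elim: Ints_cases)
    have "(snd p + \<alpha> * t) - (snd p + \<alpha> * t') \<in> \<int>" using that memV by (intro Ints_diff) auto
    then obtain b where b: "\<alpha> * (t - t') = real_of_int b" by (auto simp: algebra_simps elim: Ints_cases)
    have "a \<noteq> 0" using a ne by auto
    hence "\<alpha> = real_of_int b / real_of_int a" using a b by (simp add: field_simps)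
    hence "\<alpha> \<in> \<rat>" by simp
    with airr show False by simp
  qed
  obtain \<sigma> where sg: "\<And>i. \<tau> (\<sigma> i) = 2 * t0 - \<tau> i \<and> e (\<sigma> i) = e i"
  proof -
    have "\<forall>i. \<exists>j. \<tau> j = 2 * t0 - \<tau> i \<and> e j = e i" using gsurj R gE by blast
    hence "\<exists>\<sigma>. \<forall>i. \<tau> (\<sigma> i) = 2 * t0 - \<tau> i \<and> e (\<sigma> i) = e i" by (rule choice)
    thus ?thesis using that by blast
  qed
  have ss: "\<sigma> (\<sigma> i) = i" for i using sg[of i] sg[of "\<sigma> i"] ginj by simp
  have ssurj: "surj \<sigma>" using ss by (metis surjI)
  have rev: "\<sigma> j < \<sigma> i" if "\<tau> i < \<tau> j" for i j
  proof (rule ccontr)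
    assume "\<not> \<sigma> j < \<sigma> i"
    hence "\<tau> (\<sigma> i) \<le> \<tau> (\<sigma> j)" using mo by (simp add: mono_def)
    thus False using sg[of i] sg[of j] that by simp
  qed
  have eqdbl: "(\<tau> i, H) \<in> E \<and> (\<tau> i, V) \<in> E" if "\<tau> i = \<tau> j" "i \<noteq> j" for i j
  proof -
    have "e i \<noteq> e j" using ginj that by blast
    thus ?thesis using gE[of i] gE[of j] that letter_cases[of "e i"] letter_cases[of "e j"] by auto
  qed
  have nodbl_sym: "(t, H) \<in> E \<and> (t, V) \<in> E \<Longrightarrow> (t0, H) \<in> E \<and> (t0, V) \<in> E" for t
  proof -
    assume h: "(t, H) \<in> E \<and> (t, V) \<in> E"
    have "(2 * t0 - t, H) \<in> E" "(2 * t0 - t, V) \<in> E" using R h by auto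
    hence "t = 2 * t0 - t" using dbl h by blast
    hence "t = t0" by simp
    thus ?thesis using h by simp
  qed
  have injcase: "\<exists>c. \<forall>i. \<sigma> i = c - i" if nd: "\<not> ((t0, H) \<in> E \<and> (t0, V) \<in> E)"
  proof -
    have tinj: "\<tau> i < \<tau> j" if "i < j" for i j
    proof -
      have "\<tau> i \<le> \<tau> j" using mo that by (simp add: mono_def)
      moreover have "\<tau> i \<noteq> \<tau> j" using eqdbl[of i j] nodbl_sym nd that by auto
      ultimately show ?thesis by simp
    qed
    have "\<sigma> i = \<sigma> 0 - i" for i by (rule SD[OF ssurj]) (use rev tinj in blast)
    thus ?thesis by blast
  qed
  have D: "even_symmetric e" if qD: "q = ptD"
  proof -
    have noev: "(t0, L) \<notin> E" for L
    proof
      assume "(t0, L) \<in> E"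
      have h: "fst p + t0 - 1/2 \<in> \<int>" "snd p + \<alpha> * t0 - 1/2 \<in> \<int>" using t0 qD by (auto simp: ptD_def)
      show False
      proof (cases L)
        case H
        hence "(fst p + t0) - (fst p + t0 - 1/2) \<in> \<int>" using \<open>(t0, L) \<in> E\<close> memH h(1) by (intro Ints_diff) auto
        thus False using half_nint by simp
      next
        case V
        hence "(snd p + \<alpha> * t0) - (snd p + \<alpha> * t0 - 1/2) \<in> \<int>" using \<open>(t0, L) \<in> E\<close> memV h(2) by (intro Ints_diff) auto
        thus False using half_nint by simp
      qed
    qed
    obtain c where c: "\<And>i. \<sigma> i = c - i" using injcase noev by blast
    have "odd c"
    proof (rule ccontr)
      assume "\<not> odd c"
      then obtain m where "c = 2 * m" by (metis evenE)
      hence "\<sigma> m = m" using c by simp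
      hence "\<tau> m = t0" using sg[of m] by simp
      thus False using gE[of m] noev by simp
    qed
    then obtain b where "c = 2 * b + 1" by (rule oddE)
    hence N: "c = 2 * (b+1) - 1" by simp
    define N where "N = b + 1"
    have "e (N + int k) = e (N - int k - 1)" for k
    proof -
      have "\<sigma> (N + int k) = N - int k - 1" using c[of "N + int k"] N by (simp add: N_def)
      thus ?thesis using sg[of "N + int k"] by simp
    qed
    thus ?thesis unfolding even_symmetric_def by blast
  qed
  have BC: "odd_symmetric e" if qBC: "q = ptB \<or> q = ptC"
  proof -
    obtain L0 where L0: "(t0, L0) \<in> E" "\<not> ((t0, H) \<in> E \<and> (t0, V) \<in> E)"
    proof (cases "q = ptB")
      case True
      have h: "fst p + t0 - 1/2 \<in> \<int>" "snd p + \<alpha> * t0 \<in> \<int>" using t0 True by (auto simp: ptB_def)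
      have "(t0, H) \<notin> E"
      proof
        assume "(t0, H) \<in> E"
        hence "(fst p + t0) - (fst p + t0 - 1/2) \<in> \<int>" using memH h(1) by (intro Ints_diff) auto
        thus False using half_nint by simp
      qed
      thus ?thesis using that[of V] h memV by auto
    next
      case False
      hence qC: "q = ptC" using qBC by simp
      have h: "fst p + t0 \<in> \<int>" "snd p + \<alpha> * t0 - 1/2 \<in> \<int>" using t0 qC by (auto simp: ptC_def)
      have "(t0, V) \<notin> E"
      proof
        assume "(t0, V) \<in> E"
        hence "(snd p + \<alpha> * t0) - (snd p + \<alpha> * t0 - 1/2) \<in> \<int>" using memV h(2) by (intro Ints_diff) auto
        thus False using half_nint by simp
      qed
      thus ?thesis using that[of H] h memH by auto
    qed
    obtain c where c: "\<And>i. \<sigma> i = c - i" using injcase L0(2) by blast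
    obtain i0 where i0: "\<tau> i0 = t0" "e i0 = L0" using gsurj[OF L0(1)] by blast
    have "\<sigma> i0 = i0" using sg[of i0] i0 ginj by simp
    hence cc: "c = 2 * i0" using c[of i0] by simp
    have "e (i0 + int k) = e (i0 - int k)" for k
    proof -
      have "\<sigma> (i0 + int k) = i0 - int k" using c[of "i0 + int k"] cc by simp
      thus ?thesis using sg[of "i0 + int k"] by simp
    qed
    thus ?thesis unfolding odd_symmetric_def by blast
  qed
  have A: "almost_symmetric e" if qA: "q = ptA"
  proof -
    have h: "fst p + t0 \<in> \<int>" "snd p + \<alpha> * t0 \<in> \<int>" using t0 qA by (auto simp: ptA_def)
    obtain a where a: "\<tau> a = t0" "e a = H" using gsurj[of t0 H] h memH by blast
    obtain b where b: "\<tau> b = t0" "e b = V" using gsurj[of t0 V] h memV by blast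
    have ab: "a \<noteq> b" using a b by auto
    have only: "i = a \<or> i = b" if "\<tau> i = t0" for i
      using that a b ginj[of i a] ginj[of i b] letter_cases[of "e i"] by auto
    define N where "N = max a b"
    have N1: "min a b = N - 1"
    proof (rule ccontr)
      assume "min a b \<noteq> N - 1"
      hence lt: "min a b < N - 1" using ab by (simp add: N_def)
      have "\<tau> (min a b) \<le> \<tau> (N - 1)" "\<tau> (N - 1) \<le> \<tau> N" using mo lt by (auto simp: mono_def)
      moreover have "\<tau> (min a b) = t0" "\<tau> N = t0" using a b by (auto simp: N_def min_def max_def)
      ultimately have "\<tau> (N - 1) = t0" by simp
      from only[OF this] lt show False by (auto simp: N_def)
    qed
    have pair: "{a, b} = {N - 1, N}" using N1 by (auto simp: N_def min_def max_def)
    have tN: "\<tau> (N - 1) = t0" "\<tau> N = t0" using pair a b by (auto simp: doubleton_eq_iff)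
    have eN: "e N \<noteq> e (N - 1)" using pair a b by (auto simp: doubleton_eq_iff)
    have fx: "\<sigma> x = x" if "\<tau> x = t0" for x using sg[of x] that ginj by simp
    define sw where "sw x = (if x = N - 1 then N else if x = N then N - 1 else x)" for x :: int
    have swsw: "sw (sw x) = x" for x by (simp add: sw_def)
    have tsw: "\<tau> (sw x) = \<tau> x" for x using tN by (simp add: sw_def)
    define \<sigma>' where "\<sigma>' x = sw (\<sigma> x)" for x
    have s'surj: "surj \<sigma>'"
    proof (rule surjI)
      fix x show "\<sigma>' (\<sigma> (sw x)) = x" by (simp add: \<sigma>'_def ss swsw)
    qed
    have s'dec: "\<sigma>' j < \<sigma>' i" if "i < j" for i j
    proof (cases "\<tau> i < \<tau> j")
      case True
      have "\<tau> (\<sigma>' i) = 2 * t0 - \<tau> i" "\<tau> (\<sigma>' j) = 2 * t0 - \<tau> j" using sg tsw by (auto simp: \<sigma>'_def)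
      show ?thesis
      proof (rule ccontr)
        assume "\<not> \<sigma>' j < \<sigma>' i"
        hence "\<tau> (\<sigma>' i) \<le> \<tau> (\<sigma>' j)" using mo by (simp add: mono_def)
        thus False using True \<open>\<tau> (\<sigma>' i) = _\<close> \<open>\<tau> (\<sigma>' j) = _\<close> by simp
      qed
    next
      case False
      hence eq: "\<tau> i = \<tau> j" using mo that by (auto simp: mono_def order.order_iff_strict)
      have "(\<tau> i, H) \<in> E \<and> (\<tau> i, V) \<in> E" using eqdbl[OF eq] that by simp
      hence "\<tau> i = t0" using dbl[of "\<tau> i" t0] h memH memV by blast
      hence "i \<in> {N-1, N}" "j \<in> {N-1, N}" using only eq pair by auto
      hence ij: "i = N - 1" "j = N" using that by auto
      show ?thesis using ij fx tN by (simp add: \<sigma>'_def sw_def)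
    qed
    have s'form: "\<sigma>' i = \<sigma>' 0 - i" for i by (rule SD[OF s'surj s'dec])
    have "\<sigma>' N = N - 1" using fx[OF tN(2)] by (simp add: \<sigma>'_def sw_def)
    hence c: "\<sigma>' i = 2 * N - 1 - i" for i using s'form[of N] s'form[of i] by simp
    have "e (N + int k) = e (N - int k - 1)" if "k \<ge> 1" for k
    proof -
      have "\<sigma> (N + int k) = sw (\<sigma>' (N + int k))" by (simp add: \<sigma>'_def swsw)
      also have "\<dots> = N - int k - 1" using c[of "N + int k"] that by (simp add: sw_def)
      finally show ?thesis using sg[of "N + int k"] by simp
    qed
    thus ?thesis unfolding almost_symmetric_def using eN by blast
  qed
  show ?thesis using A BC D by blast
qed


lemma two_refl_per:
  assumes ra: "\<And>n. \<bar>n\<bar> \<ge> K \<Longrightarrow> e (a - n) = e n" and rb: "\<And>n. \<bar>n\<bar> \<ge> K \<Longrightarrow> e (b - n) = e n"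
    and ab: "a \<noteq> b"
  shows "eventually_periodic e"
proof -
  define M where "M = \<bar>K\<bar> + \<bar>a\<bar>"
  have step: "e (n + (b - a)) = e n" if "n \<ge> M" for n
  proof -
    have "\<bar>a - n\<bar> \<ge> K" "\<bar>n\<bar> \<ge> K" using that by (auto simp: M_def)
    hence "e (b - (a - n)) = e (a - n)" "e (a - n) = e n" using ra rb by auto
    thus ?thesis by (simp add: algebra_simps)
  qed
  show ?thesis
  proof (cases "b - a > 0")
    case True
    thus ?thesis unfolding eventually_periodic_def using step by blast
  next
    case False
    hence P: "a - b > 0" using ab by simp
    have "e (m + (a - b)) = e m" if "m \<ge> M" for m
    proof -
      have "m + (a - b) \<ge> M" using that P by simp
      from step[OF this] show ?thesis by simp
    qed
    thus ?thesis unfolding eventually_periodic_def using P by blast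
  qed
qed

lemma odd_refl: "odd_symmetric e \<Longrightarrow> \<exists>N. \<forall>n. e (2 * N - n) = e n"
proof -
  assume "odd_symmetric e"
  then obtain N where h: "\<And>k. e (N + int k) = e (N - int k)" unfolding odd_symmetric_def by blast
  have "e (2 * N - n) = e n" for n
  proof (cases "n \<ge> N")
    case True then show ?thesis using h[of "nat (n - N)"] by simp
  next
    case False then show ?thesis using h[of "nat (N - n)"] by simp
  qed
  thus ?thesis by blast
qed

lemma even_refl: "even_symmetric e \<Longrightarrow> \<exists>N. \<forall>n. e (2 * N - 1 - n) = e n"
proof -
  assume "even_symmetric e"
  then obtain N where h: "\<And>k. e (N + int k) = e (N - int k - 1)" unfolding even_symmetric_def by blast
  have "e (2 * N - 1 - n) = e n" for n
  proof (cases "n \<ge> N")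
    case True then show ?thesis using h[of "nat (n - N)"] by (simp add: algebra_simps)
  next
    case False then show ?thesis using h[of "nat (N - 1 - n)"] by (simp add: algebra_simps)
  qed
  thus ?thesis by blast
qed

lemma almost_refl: "almost_symmetric e \<Longrightarrow> \<exists>N. (\<forall>n. n \<noteq> N - 1 \<longrightarrow> n \<noteq> N \<longrightarrow> e (2 * N - 1 - n) = e n) \<and> e N \<noteq> e (N - 1)"
proof -
  assume "almost_symmetric e"
  then obtain N where h: "\<And>k. k \<ge> 1 \<Longrightarrow> e (N + int k) = e (N - int k - 1)" and ne: "e N \<noteq> e (N - 1)"
    unfolding almost_symmetric_def by blast
  have "e (2 * N - 1 - n) = e n" if "n \<noteq> N - 1" "n \<noteq> N" for n
  proof (cases "n \<ge> N")
    case True then show ?thesis using h[of "nat (n - N)"] that by (simp add: algebra_simps)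
  next
    case False then show ?thesis using h[of "nat (N - 1 - n)"] that by (simp add: algebra_simps)
  qed
  thus ?thesis using ne by blast
qed

lemma excl:
  assumes ap: "\<not> eventually_periodic e"
  shows "\<not> (odd_symmetric e \<and> even_symmetric e)" "\<not> (odd_symmetric e \<and> almost_symmetric e)"
    "\<not> (even_symmetric e \<and> almost_symmetric e)"
proof -
  show "\<not> (odd_symmetric e \<and> even_symmetric e)"
  proof
    assume h: "odd_symmetric e \<and> even_symmetric e"
    obtain N1 where 1: "\<And>n. e (2 * N1 - n) = e n" using odd_refl h by blast
    obtain N2 where 2: "\<And>n. e (2 * N2 - 1 - n) = e n" using even_refl h by blast
    have "2 * N1 \<noteq> 2 * N2 - 1" by presburger
    from two_refl_per[of 0 e "2 * N1" "2 * N2 - 1"] 1 2 this ap show False by blast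
  qed
  show "\<not> (odd_symmetric e \<and> almost_symmetric e)"
  proof
    assume h: "odd_symmetric e \<and> almost_symmetric e"
    obtain N1 where 1: "\<And>n. e (2 * N1 - n) = e n" using odd_refl h by blast
    obtain N where 2: "\<And>n. n \<noteq> N - 1 \<Longrightarrow> n \<noteq> N \<Longrightarrow> e (2 * N - 1 - n) = e n" using almost_refl h by blast
    have "2 * N1 \<noteq> 2 * N - 1" by presburger
    moreover have "e (2 * N - 1 - n) = e n" if "\<bar>n\<bar> \<ge> \<bar>N\<bar> + 2" for n using 2 that by auto
    ultimately show False using two_refl_per[of "\<bar>N\<bar> + 2" e "2 * N1" "2 * N - 1"] 1 ap by blast
  qed
  show "\<not> (even_symmetric e \<and> almost_symmetric e)"
  proof
    assume h: "even_symmetric e \<and> almost_symmetric e"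
    obtain N2 where 1: "\<And>n. e (2 * N2 - 1 - n) = e n" using even_refl h by blast
    obtain N where 2: "\<And>n. n \<noteq> N - 1 \<Longrightarrow> n \<noteq> N \<Longrightarrow> e (2 * N - 1 - n) = e n" and ne: "e N \<noteq> e (N - 1)"
      using almost_refl h by blast
    show False
    proof (cases "N2 = N")
      case True
      have "e (2 * N - 1 - N) = e N" using 1 True by blast
      thus False using ne by simp
    next
      case False
      hence "2 * N2 - 1 \<noteq> 2 * N - 1" by simp
      moreover have "e (2 * N - 1 - n) = e n" if "\<bar>n\<bar> \<ge> \<bar>N\<bar> + 2" for n using 2 that by auto
      ultimately show False using two_refl_per[of "\<bar>N\<bar> + 2" e "2 * N2 - 1" "2 * N - 1"] 1 ap by blast
    qed
  qed
qed

theorem lemma4p1: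
  fixes \<epsilon> :: "int \<Rightarrow> letter"
  assumes "sturmian \<epsilon>"
  shows "(symmetric \<epsilon> \<longleftrightarrow>
            (\<exists>p \<alpha>. unif_distributed \<alpha> \<and> cutting_sequence p \<alpha> \<epsilon> \<and>
                   (\<exists>q\<in>weierstrass_points. passes_through p \<alpha> q)))
       \<and> (even_symmetric \<epsilon> \<longleftrightarrow>
            (\<exists>p \<alpha>. unif_distributed \<alpha> \<and> cutting_sequence p \<alpha> \<epsilon> \<and> passes_through p \<alpha> ptD))
       \<and> (almost_symmetric \<epsilon> \<longleftrightarrow>
            (\<exists>p \<alpha>. unif_distributed \<alpha> \<and> cutting_sequence p \<alpha> \<epsilon> \<and> passes_through p \<alpha> ptA))
       \<and> (odd_symmetric \<epsilon> \<longleftrightarrow>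
            (\<exists>p \<alpha>. unif_distributed \<alpha> \<and> cutting_sequence p \<alpha> \<epsilon> \<and>
                   (passes_through p \<alpha> ptB \<or> passes_through p \<alpha> ptC)))"
proof -
  have ap: "\<not> eventually_periodic \<epsilon>" using assms by (rule sturm_aper)
  note ex = excl[OF ap]
  have W: "q \<in> weierstrass_points \<longleftrightarrow> q = ptA \<or> q = ptB \<or> q = ptC \<or> q = ptD" for q
    unfolding weierstrass_points_def by auto
  have inW: "ptA \<in> weierstrass_points" "ptB \<in> weierstrass_points" "ptC \<in> weierstrass_points" "ptD \<in> weierstrass_points"
    using W by auto
  have fw: "(q = ptD \<longrightarrow> even_symmetric \<epsilon>) \<and> (q = ptA \<longrightarrow> almost_symmetric \<epsilon>) \<and> (q = ptB \<or> q = ptC \<longrightarrow> odd_symmetric \<epsilon>)"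
    if "unif_distributed \<alpha>" "cutting_sequence p \<alpha> \<epsilon>" "passes_through p \<alpha> q" "q \<in> weierstrass_points" for p \<alpha> q
    using fwd[OF that] .
  have hd: "\<exists>p \<alpha> q. unif_distributed \<alpha> \<and> cutting_sequence p \<alpha> \<epsilon> \<and> q \<in> weierstrass_points \<and> passes_through p \<alpha> q"
    if "symmetric \<epsilon>" using hard[OF assms that] by blast
  have 1: "symmetric \<epsilon> \<longleftrightarrow> (\<exists>p \<alpha>. unif_distributed \<alpha> \<and> cutting_sequence p \<alpha> \<epsilon> \<and> (\<exists>q\<in>weierstrass_points. passes_through p \<alpha> q))"
  proof
    assume "symmetric \<epsilon>" thus "\<exists>p \<alpha>. unif_distributed \<alpha> \<and> cutting_sequence p \<alpha> \<epsilon> \<and> (\<exists>q\<in>weierstrass_points. passes_through p \<alpha> q)"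
      using hd by blast
  next
    assume "\<exists>p \<alpha>. unif_distributed \<alpha> \<and> cutting_sequence p \<alpha> \<epsilon> \<and> (\<exists>q\<in>weierstrass_points. passes_through p \<alpha> q)"
    then obtain p \<alpha> q where h: "unif_distributed \<alpha>" "cutting_sequence p \<alpha> \<epsilon>" "q \<in> weierstrass_points" "passes_through p \<alpha> q"
      by blast
    from fw[OF h(1,2,4,3)] h(3) W show "symmetric \<epsilon>" unfolding symmetric_def by blast
  qed
  have cls: "\<exists>p \<alpha> q. unif_distributed \<alpha> \<and> cutting_sequence p \<alpha> \<epsilon> \<and> q \<in> weierstrass_points \<and> passes_through p \<alpha> q \<and>
      (q = ptD \<longrightarrow> even_symmetric \<epsilon>) \<and> (q = ptA \<longrightarrow> almost_symmetric \<epsilon>) \<and> (q = ptB \<or> q = ptC \<longrightarrow> odd_symmetric \<epsilon>)"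
    if "symmetric \<epsilon>" using hd[OF that] fw by blast
  have 2: "even_symmetric \<epsilon> \<longleftrightarrow> (\<exists>p \<alpha>. unif_distributed \<alpha> \<and> cutting_sequence p \<alpha> \<epsilon> \<and> passes_through p \<alpha> ptD)"
  proof
    assume ev: "even_symmetric \<epsilon>"
    hence "symmetric \<epsilon>" by (simp add: symmetric_def)
    from cls[OF this] obtain p \<alpha> q where h: "unif_distributed \<alpha>" "cutting_sequence p \<alpha> \<epsilon>" "q \<in> weierstrass_points"
      "passes_through p \<alpha> q" "q = ptD \<longrightarrow> even_symmetric \<epsilon>" "q = ptA \<longrightarrow> almost_symmetric \<epsilon>"
      "q = ptB \<or> q = ptC \<longrightarrow> odd_symmetric \<epsilon>" by blast
    have "q = ptD" using h(3,6,7) W ev ex by blast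
    thus "\<exists>p \<alpha>. unif_distributed \<alpha> \<and> cutting_sequence p \<alpha> \<epsilon> \<and> passes_through p \<alpha> ptD" using h by blast
  next
    assume "\<exists>p \<alpha>. unif_distributed \<alpha> \<and> cutting_sequence p \<alpha> \<epsilon> \<and> passes_through p \<alpha> ptD"
    thus "even_symmetric \<epsilon>" using fw inW by blast
  qed
  have 3: "almost_symmetric \<epsilon> \<longleftrightarrow> (\<exists>p \<alpha>. unif_distributed \<alpha> \<and> cutting_sequence p \<alpha> \<epsilon> \<and> passes_through p \<alpha> ptA)"
  proof
    assume ev: "almost_symmetric \<epsilon>"
    hence "symmetric \<epsilon>" by (simp add: symmetric_def)
    from cls[OF this] obtain p \<alpha> q where h: "unif_distributed \<alpha>" "cutting_sequence p \<alpha> \<epsilon>" "q \<in> weierstrass_points"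
      "passes_through p \<alpha> q" "q = ptD \<longrightarrow> even_symmetric \<epsilon>" "q = ptA \<longrightarrow> almost_symmetric \<epsilon>"
      "q = ptB \<or> q = ptC \<longrightarrow> odd_symmetric \<epsilon>" by blast
    have "q = ptA" using h(3,5,7) W ev ex by blast
    thus "\<exists>p \<alpha>. unif_distributed \<alpha> \<and> cutting_sequence p \<alpha> \<epsilon> \<and> passes_through p \<alpha> ptA" using h by blast
  next
    assume "\<exists>p \<alpha>. unif_distributed \<alpha> \<and> cutting_sequence p \<alpha> \<epsilon> \<and> passes_through p \<alpha> ptA"
    thus "almost_symmetric \<epsilon>" using fw inW by blast
  qed
  have 4: "odd_symmetric \<epsilon> \<longleftrightarrow> (\<exists>p \<alpha>. unif_distributed \<alpha> \<and> cutting_sequence p \<alpha> \<epsilon> \<and> (passes_through p \<alpha> ptB \<or> passes_through p \<alpha> ptC))"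
  proof
    assume ev: "odd_symmetric \<epsilon>"
    hence "symmetric \<epsilon>" by (simp add: symmetric_def)
    from cls[OF this] obtain p \<alpha> q where h: "unif_distributed \<alpha>" "cutting_sequence p \<alpha> \<epsilon>" "q \<in> weierstrass_points"
      "passes_through p \<alpha> q" "q = ptD \<longrightarrow> even_symmetric \<epsilon>" "q = ptA \<longrightarrow> almost_symmetric \<epsilon>"
      "q = ptB \<or> q = ptC \<longrightarrow> odd_symmetric \<epsilon>" by blast
    have "q = ptB \<or> q = ptC" using h(3,5,6) W ev ex by blast
    thus "\<exists>p \<alpha>. unif_distributed \<alpha> \<and> cutting_sequence p \<alpha> \<epsilon> \<and> (passes_through p \<alpha> ptB \<or> passes_through p \<alpha> ptC)"
      using h by blast
  next
    assume "\<exists>p \<alpha>. unif_distributed \<alpha> \<and> cutting_sequence p \<alpha> \<epsilon> \<and> (passes_through p \<alpha> ptB \<or> passes_through p \<alpha> ptC)"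
    thus "odd_symmetric \<epsilon>" using fw inW by blast
  qed
  show ?thesis using 1 2 3 4 by blast
qed


end
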